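(* Let $W$ be a group admitting an odd connected Coxeter system $(W,S)$ of rank $n\geq 3$ whose graph $\mathcal V_{(W,S)}$ is a tree, and let $m_1,\dots,m_{n-1}$ be the (multiset of) finite exponents of this system. Then there is an injective homomorphism $$W\hookrightarrow \operatorname{Aut}\big((\mathbb Z/m_1\mathbb Z)\ast(\mathbb Z/m_2\mathbb Z)\ast\cdots\ast(\mathbb Z/m_{n-1}\mathbb Z)\big).$$
   Context: A Coxeter system $(W,S)$ with $S=\{w_1,\dots,w_n\}$ means that $W$ has the presentation $\langle w_1,\dots,w_n \mid (w_iw_j)^{m_{ij}}=1\rangle$, where $m_{ii}=1$ and $m_{ij}=m_{ji}\in\{2,3,4,\dots\}\cup\{\infty\}$ for $i\neq j$ (no relation is imposed when $m_{ij}=\infty$). The numbers $m_{ij}$, $i\neq j$, are the exponents and $n$ is the rank. The system is odd if every exponent is odd or $\infty$. The graph $\mathcal V_{(W,S)}$ has vertex set $\{1,\dots,n\}$ and an edge between $i\neq j$ iff $m_{ij}<\infty$; the system is connected if $\mathcal V_{(W,S)}$ is connected. When $\mathcal V_{(W,S)}$ is a tree there are exactly $n-1$ finite exponents (one per edge). $\ast$ denotes free product. *)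

theory Defs
  imports "HOL-Algebra.Algebra" "HOL-Library.Extended_Nat" "HOL-Library.Multiset"
begin

text \<open>Words over the generators I: letters (i, True) stand for x_i, (i, False) for x_i inverse.\<close>
definition pres_words :: "'a set \<Rightarrow> ('a \<times> bool) list set" where
  "pres_words I = {w. fst ` set w \<subseteq> I}"

definition pres_step :: "'a set \<Rightarrow> ('a \<times> bool) list set \<Rightarrow> (('a \<times> bool) list \<times> ('a \<times> bool) list) set" where
  "pres_step I R = {(u @ v, u @ r @ v) | u v r. u \<in> pres_words I \<and> v \<in> pres_words I \<and>
      r \<in> R \<union> {[(i, b), (i, \<not> b)] | i b. i \<in> I}}"

definition pres_rel :: "'a set \<Rightarrow> ('a \<times> bool) list set \<Rightarrow> (('a \<times> bool) list \<times> ('a \<times> bool) list) set" where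
  "pres_rel I R = ((pres_step I R \<union> (pres_step I R)\<inverse>)\<^sup>*) \<inter> (pres_words I \<times> pres_words I)"

definition presented_group :: "'a set \<Rightarrow> ('a \<times> bool) list set \<Rightarrow> ('a \<times> bool) list set monoid" where
  "presented_group I R =
    \<lparr> carrier = pres_words I // pres_rel I R,
      monoid.mult = (\<lambda>A B. pres_rel I R `` {x @ y | x y. x \<in> A \<and> y \<in> B}),
      one = pres_rel I R `` {[]} \<rparr>"

text \<open>Exponents m i j for generators w_0..w_(n-1); \<infinity> means no relation.\<close>
definition coxeter_matrix :: "nat \<Rightarrow> (nat \<Rightarrow> nat \<Rightarrow> enat) \<Rightarrow> bool" where
  "coxeter_matrix n m \<longleftrightarrow> (\<forall>i<n. m i i = 1) \<and> (\<forall>i<n. \<forall>j<n. m i j = m j i)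
     \<and> (\<forall>i<n. \<forall>j<n. i \<noteq> j \<longrightarrow> m i j \<ge> 2)"

text \<open>Relators (w_i w_j)^(m i j) for all finite m i j (for i = j this is w_i^2).\<close>
definition coxeter_relators :: "nat \<Rightarrow> (nat \<Rightarrow> nat \<Rightarrow> enat) \<Rightarrow> (nat \<times> bool) list set" where
  "coxeter_relators n m = {concat (replicate k [(i, True), (j, True)]) | i j k. i < n \<and> j < n \<and> m i j = enat k}"

definition coxeter_group :: "nat \<Rightarrow> (nat \<Rightarrow> nat \<Rightarrow> enat) \<Rightarrow> (nat \<times> bool) list set monoid" where
  "coxeter_group n m = presented_group {..<n} (coxeter_relators n m)"

definition odd_coxeter :: "nat \<Rightarrow> (nat \<Rightarrow> nat \<Rightarrow> enat) \<Rightarrow> bool" where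
  "odd_coxeter n m \<longleftrightarrow> (\<forall>i<n. \<forall>j<n. i \<noteq> j \<longrightarrow> m i j = \<infinity> \<or> (\<exists>k. m i j = enat k \<and> odd k))"

definition cox_adj :: "nat \<Rightarrow> (nat \<Rightarrow> nat \<Rightarrow> enat) \<Rightarrow> nat \<Rightarrow> nat \<Rightarrow> bool" where
  "cox_adj n m i j \<longleftrightarrow> i < n \<and> j < n \<and> i \<noteq> j \<and> m i j \<noteq> \<infinity>"

definition cox_connected :: "nat \<Rightarrow> (nat \<Rightarrow> nat \<Rightarrow> enat) \<Rightarrow> bool" where
  "cox_connected n m \<longleftrightarrow> (\<forall>i<n. \<forall>j<n. (i, j) \<in> {(a, b). cox_adj n m a b}\<^sup>*)"

definition cox_has_cycle :: "nat \<Rightarrow> (nat \<Rightarrow> nat \<Rightarrow> enat) \<Rightarrow> bool" where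
  "cox_has_cycle n m \<longleftrightarrow> (\<exists>vs. length vs \<ge> 3 \<and> distinct vs \<and>
      (\<forall>k. Suc k < length vs \<longrightarrow> cox_adj n m (vs ! k) (vs ! Suc k)) \<and>
      cox_adj n m (last vs) (hd vs))"

definition cox_tree :: "nat \<Rightarrow> (nat \<Rightarrow> nat \<Rightarrow> enat) \<Rightarrow> bool" where
  "cox_tree n m \<longleftrightarrow> cox_connected n m \<and> \<not> cox_has_cycle n m"

definition finite_exponents :: "nat \<Rightarrow> (nat \<Rightarrow> nat \<Rightarrow> enat) \<Rightarrow> nat multiset" where
  "finite_exponents n m = image_mset (\<lambda>(i, j). the_enat (m i j))
     (mset_set {(i, j). i < j \<and> j < n \<and> m i j \<noteq> \<infinity>})"

definition free_product_cyclic :: "nat list \<Rightarrow> (nat \<times> bool) list set monoid" where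
  "free_product_cyclic ms = presented_group {..<length ms}
     {replicate (ms ! l) (l, True) | l. l < length ms}"

end

theory Submission
  imports Defs
begin

locale pres =
  fixes I :: "'a set" and R :: "('a \<times> bool) list set"
  assumes R_words: "R \<subseteq> pres_words I"
begin

abbreviation "Wd \<equiv> pres_words I"
abbreviation "S \<equiv> pres_step I R"
abbreviation "rel \<equiv> pres_rel I R"
abbreviation "G \<equiv> presented_group I R"

lemma words_append[simp]: "a @ b \<in> Wd \<longleftrightarrow> a \<in> Wd \<and> b \<in> Wd"
  by (auto simp: pres_words_def)

lemma words_Cons[simp]: "c # b \<in> Wd \<longleftrightarrow> fst c \<in> I \<and> b \<in> Wd"
  by (auto simp: pres_words_def)

lemma words_Nil[simp]: "[] \<in> Wd"
  by (auto simp: pres_words_def)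

lemma step_words: "(a, b) \<in> S \<Longrightarrow> a \<in> Wd \<and> b \<in> Wd"
  unfolding pres_step_def
  apply clarify
  subgoal for u v r using R_words by auto
  done

lemma rel_words: "(a, b) \<in> rel \<Longrightarrow> a \<in> Wd \<and> b \<in> Wd"
  by (auto simp: pres_rel_def)

lemma rel_refl: "a \<in> Wd \<Longrightarrow> (a, a) \<in> rel"
  by (auto simp: pres_rel_def)

lemma rel_sym: "(a, b) \<in> rel \<Longrightarrow> (b, a) \<in> rel"
proof -
  assume "(a, b) \<in> rel"
  then have "(a, b) \<in> (S \<union> S\<inverse>)\<^sup>*" "a \<in> Wd" "b \<in> Wd" by (auto simp: pres_rel_def)
  then have "(b, a) \<in> ((S \<union> S\<inverse>)\<inverse>)\<^sup>*" by (simp add: rtrancl_converse)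
  moreover have "(S \<union> S\<inverse>)\<inverse> = S \<union> S\<inverse>" by auto
  ultimately show ?thesis using \<open>a \<in> Wd\<close> \<open>b \<in> Wd\<close> by (auto simp: pres_rel_def)
qed

lemma rel_trans: "(a, b) \<in> rel \<Longrightarrow> (b, c) \<in> rel \<Longrightarrow> (a, c) \<in> rel"
  by (auto simp: pres_rel_def)

lemma equiv_rel: "equiv Wd rel"
proof (rule equivI)
  show "refl_on Wd rel" unfolding refl_on_def using rel_refl rel_words by auto
  show "sym rel" unfolding sym_def using rel_sym by blast
  show "trans rel" unfolding trans_def using rel_trans by blast
qed (use rel_words in auto)

lemma step_ctx: "(a, b) \<in> S \<Longrightarrow> x \<in> Wd \<Longrightarrow> y \<in> Wd \<Longrightarrow> (x @ a @ y, x @ b @ y) \<in> S"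
  unfolding pres_step_def
  apply clarify
  subgoal for u v r
    apply (rule exI[of _ "x @ u"], rule exI[of _ "v @ y"], rule exI[of _ r])
    by auto
  done

lemma rel_ctx: "(a, b) \<in> rel \<Longrightarrow> x \<in> Wd \<Longrightarrow> y \<in> Wd \<Longrightarrow> (x @ a @ y, x @ b @ y) \<in> rel"
proof -
  assume h: "(a, b) \<in> rel" and x: "x \<in> Wd" and y: "y \<in> Wd"
  from h have st: "(a, b) \<in> (S \<union> S\<inverse>)\<^sup>*" and aw: "a \<in> Wd" and bw: "b \<in> Wd" by (auto simp: pres_rel_def)
  have "(x @ a @ y, x @ b @ y) \<in> (S \<union> S\<inverse>)\<^sup>*"
    using st
  proof (induction rule: rtrancl_induct)
    case base then show ?case by simp
  next
    case (step b c)
    have "(b, c) \<in> S \<or> (c, b) \<in> S" using step(2) by auto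
    then have "(x @ b @ y, x @ c @ y) \<in> S \<union> S\<inverse>" using step_ctx x y by blast
    then show ?case using step.IH by (rule rtrancl_into_rtrancl[rotated])
  qed
  then show ?thesis using x y aw bw by (auto simp: pres_rel_def)
qed

lemma rel_app: "(a, b) \<in> rel \<Longrightarrow> (c, d) \<in> rel \<Longrightarrow> (a @ c, b @ d) \<in> rel"
proof -
  assume 1: "(a, b) \<in> rel" and 2: "(c, d) \<in> rel"
  have "(a @ c, b @ c) \<in> rel" using rel_ctx[OF 1, of "[]" c] 2 rel_words by auto
  moreover have "(b @ c, b @ d) \<in> rel" using rel_ctx[OF 2, of b "[]"] 1 rel_words by auto
  ultimately show ?thesis by (rule rel_trans)
qed

lemma step_triv: "u \<in> Wd \<Longrightarrow> v \<in> Wd \<Longrightarrow> i \<in> I \<Longrightarrow> (u @ v, u @ [(i, b), (i, \<not> b)] @ v) \<in> S"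
  unfolding pres_step_def by blast

lemma step_R: "u \<in> Wd \<Longrightarrow> v \<in> Wd \<Longrightarrow> r \<in> R \<Longrightarrow> (u @ v, u @ r @ v) \<in> S"
  unfolding pres_step_def by blast

lemma rel_R: "r \<in> R \<Longrightarrow> (r, []) \<in> rel"
proof -
  assume r: "r \<in> R"
  have "([] @ [], [] @ r @ []) \<in> S" by (rule step_R[OF _ _ r]) auto
  then have "([], r) \<in> rel" using step_words by (auto simp: pres_rel_def)
  then show ?thesis by (rule rel_sym)
qed

lemma rel_triv: "i \<in> I \<Longrightarrow> ([(i, b), (i, \<not> b)], []) \<in> rel"
proof -
  assume i: "i \<in> I"
  have "([] @ [], [] @ [(i, b), (i, \<not> b)] @ []) \<in> S" by (rule step_triv[OF _ _ i]) auto
  then have "([], [(i, b), (i, \<not> b)]) \<in> rel" using step_words i by (auto simp: pres_rel_def)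
  then show ?thesis by (rule rel_sym)
qed

definition cls :: "('a \<times> bool) list \<Rightarrow> ('a \<times> bool) list set" where
  "cls w = rel `` {w}"

lemma cls_eq_iff: "a \<in> Wd \<Longrightarrow> b \<in> Wd \<Longrightarrow> cls a = cls b \<longleftrightarrow> (a, b) \<in> rel"
  unfolding cls_def using equiv_class_eq_iff[OF equiv_rel] by auto

lemma cls_eqI: "(a, b) \<in> rel \<Longrightarrow> cls a = cls b"
  using cls_eq_iff rel_words by blast

lemma carrier_G: "carrier G = Wd // rel"
  by (simp add: presented_group_def)

lemma cls_in_carrier: "a \<in> Wd \<Longrightarrow> cls a \<in> carrier G"
  unfolding carrier_G cls_def by (rule quotientI)

lemma carrier_cls: "A \<in> carrier G \<Longrightarrow> (\<And>a. a \<in> Wd \<Longrightarrow> A = cls a \<Longrightarrow> P) \<Longrightarrow> P"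
  unfolding carrier_G cls_def by (erule quotientE) blast

lemma mem_cls: "a \<in> Wd \<Longrightarrow> a \<in> cls a"
  unfolding cls_def using rel_refl by auto

lemma cls_mult: "a \<in> Wd \<Longrightarrow> b \<in> Wd \<Longrightarrow> cls a \<otimes>\<^bsub>G\<^esub> cls b = cls (a @ b)"
proof -
  assume a: "a \<in> Wd" and b: "b \<in> Wd"
  have eq: "{x @ y | x y. x \<in> cls a \<and> y \<in> cls b} \<subseteq> cls (a @ b)"
    unfolding cls_def using rel_app by blast
  have "cls a \<otimes>\<^bsub>G\<^esub> cls b = rel `` {x @ y | x y. x \<in> cls a \<and> y \<in> cls b}"
    by (simp add: presented_group_def)
  also have "\<dots> = cls (a @ b)"
  proof
    show "rel `` {x @ y | x y. x \<in> cls a \<and> y \<in> cls b} \<subseteq> cls (a @ b)"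
      using eq unfolding cls_def using rel_trans by blast
    show "cls (a @ b) \<subseteq> rel `` {x @ y | x y. x \<in> cls a \<and> y \<in> cls b}"
      using mem_cls[OF a] mem_cls[OF b] unfolding cls_def by blast
  qed
  finally show ?thesis .
qed

lemma one_G: "\<one>\<^bsub>G\<^esub> = cls []"
  by (simp add: presented_group_def cls_def)

definition winv :: "('a \<times> bool) list \<Rightarrow> ('a \<times> bool) list" where
  "winv w = rev (map (\<lambda>(i, b). (i, \<not> b)) w)"

lemma winv_words: "w \<in> Wd \<Longrightarrow> winv w \<in> Wd"
  by (auto simp: winv_def pres_words_def)

lemma winv_Cons: "winv ((i, b) # w) = winv w @ [(i, \<not> b)]"
  by (simp add: winv_def)

lemma rel_winv: "w \<in> Wd \<Longrightarrow> (winv w @ w, []) \<in> rel"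
proof (induction w)
  case Nil then show ?case by (simp add: winv_def rel_refl)
next
  case (Cons c w)
  obtain i b where c: "c = (i, b)" by (cases c)
  have i: "i \<in> I" and w: "w \<in> Wd" using Cons.prems c by auto
  have "(winv w @ [(i, \<not> b), (i, \<not> \<not> b)] @ w, winv w @ [] @ w) \<in> rel"
    by (rule rel_ctx[OF rel_triv[OF i] winv_words[OF w] w])
  then have "(winv (c # w) @ c # w, winv w @ w) \<in> rel" by (simp add: c winv_Cons)
  then show ?case using Cons.IH[OF w] rel_trans by blast
qed

lemma group_G: "group G"
proof (rule groupI)
  fix x y assume "x \<in> carrier G" "y \<in> carrier G"
  then show "x \<otimes>\<^bsub>G\<^esub> y \<in> carrier G"
    by (auto elim!: carrier_cls simp: cls_mult cls_in_carrier)
next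
  show "\<one>\<^bsub>G\<^esub> \<in> carrier G" by (simp add: one_G cls_in_carrier)
next
  fix x y z assume "x \<in> carrier G" "y \<in> carrier G" "z \<in> carrier G"
  then show "x \<otimes>\<^bsub>G\<^esub> y \<otimes>\<^bsub>G\<^esub> z = x \<otimes>\<^bsub>G\<^esub> (y \<otimes>\<^bsub>G\<^esub> z)"
    by (auto elim!: carrier_cls simp: cls_mult)
next
  fix x assume "x \<in> carrier G"
  then show "\<one>\<^bsub>G\<^esub> \<otimes>\<^bsub>G\<^esub> x = x"
    by (auto elim!: carrier_cls simp: cls_mult one_G)
next
  fix x assume "x \<in> carrier G"
  then obtain a where a: "a \<in> Wd" "x = cls a" by (rule carrier_cls)
  have "cls (winv a) \<in> carrier G" using winv_words[OF a(1)] by (rule cls_in_carrier)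
  moreover have "cls (winv a) \<otimes>\<^bsub>G\<^esub> x = \<one>\<^bsub>G\<^esub>"
    using a winv_words[OF a(1)] by (simp add: cls_mult one_G cls_eqI[OF rel_winv[OF a(1)]])
  ultimately show "\<exists>y\<in>carrier G. y \<otimes>\<^bsub>G\<^esub> x = \<one>\<^bsub>G\<^esub>" by blast
qed

definition gen :: "'a \<Rightarrow> ('a \<times> bool) list set" where
  "gen i = cls [(i, True)]"

lemma gen_carrier: "i \<in> I \<Longrightarrow> gen i \<in> carrier G"
  unfolding gen_def by (rule cls_in_carrier) simp

lemma cls_Cons_True: "i \<in> I \<Longrightarrow> w \<in> Wd \<Longrightarrow> cls ((i, True) # w) = gen i \<otimes>\<^bsub>G\<^esub> cls w"
  unfolding gen_def by (subst cls_mult) auto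

lemma cls_False: "i \<in> I \<Longrightarrow> cls [(i, False)] = inv\<^bsub>G\<^esub> gen i"
proof -
  assume i: "i \<in> I"
  interpret group G by (rule group_G)
  have "cls [(i, False)] \<otimes>\<^bsub>G\<^esub> gen i = \<one>\<^bsub>G\<^esub>"
    unfolding gen_def one_G using i by (simp add: cls_mult cls_eqI[OF rel_triv[OF i, of False, simplified]])
  moreover have "cls [(i, False)] \<in> carrier G" using i by (intro cls_in_carrier) simp
  ultimately show ?thesis using i gen_carrier by (simp add: inv_equality)
qed

lemma cls_Cons_False: "i \<in> I \<Longrightarrow> w \<in> Wd \<Longrightarrow> cls ((i, False) # w) = inv\<^bsub>G\<^esub> gen i \<otimes>\<^bsub>G\<^esub> cls w"
  using cls_mult[of "[(i, False)]" w] cls_False by auto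

lemma hom_ext:
  assumes "group H" "h1 \<in> hom G H" "h2 \<in> hom G H" "\<And>i. i \<in> I \<Longrightarrow> h1 (gen i) = h2 (gen i)"
    and "x \<in> carrier G"
  shows "h1 x = h2 x"
proof -
  interpret G: group G by (rule group_G)
  interpret H: group H by fact
  interpret h1: group_hom G H h1 by unfold_locales fact
  interpret h2: group_hom G H h2 by unfold_locales fact
  have "h1 (cls w) = h2 (cls w)" if "w \<in> Wd" for w
    using that
  proof (induction w)
    case Nil then show ?case by (simp flip: one_G)
  next
    case (Cons c w)
    obtain i b where c: "c = (i, b)" by (cases c)
    have i: "i \<in> I" and w: "w \<in> Wd" using Cons.prems c by auto
    show ?case
    proof (cases b)
      case True
      then show ?thesis using c i w Cons.IH[OF w] assms(4)[OF i]
        by (simp add: cls_Cons_True gen_carrier cls_in_carrier)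
    next
      case False
      then show ?thesis using c i w Cons.IH[OF w] assms(4)[OF i]
        by (simp add: cls_Cons_False gen_carrier cls_in_carrier)
    qed
  qed
  then show ?thesis using assms(5) by (auto elim: carrier_cls)
qed

definition evalw :: "('b, 'c) monoid_scheme \<Rightarrow> ('a \<Rightarrow> 'b) \<Rightarrow> ('a \<times> bool) list \<Rightarrow> 'b" where
  "evalw H f w = foldr (\<lambda>(i, b) acc. (if b then f i else inv\<^bsub>H\<^esub> f i) \<otimes>\<^bsub>H\<^esub> acc) w \<one>\<^bsub>H\<^esub>"

lemma evalw_simps[simp]:
  "evalw H f [] = \<one>\<^bsub>H\<^esub>"
  "evalw H f ((i, b) # w) = (if b then f i else inv\<^bsub>H\<^esub> f i) \<otimes>\<^bsub>H\<^esub> evalw H f w"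
  by (simp_all add: evalw_def)

context
  fixes H (structure) and f
  assumes H: "group H" and f: "f \<in> I \<rightarrow> carrier H"
begin

interpretation H: group H by (rule H)

lemma evalw_carrier: "w \<in> Wd \<Longrightarrow> evalw H f w \<in> carrier H"
  by (induction w) (auto intro!: H.m_closed funcset_mem[OF f])

lemma evalw_append: "a \<in> Wd \<Longrightarrow> evalw H f (a @ b) = evalw H f a \<otimes> evalw H f b" if "b \<in> Wd"
proof (induction a)
  case Nil then show ?case using evalw_carrier[OF that] by simp
next
  case (Cons c a)
  obtain i b where c: "c = (i, b)" by (cases c)
  then show ?case using Cons evalw_carrier[OF that] evalw_carrier funcset_mem[OF f]
    by (auto simp: H.m_assoc)
qed

context
  assumes fR: "\<And>r. r \<in> R \<Longrightarrow> evalw H f r = \<one>"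
begin

lemma evalw_step: "(a, b) \<in> S \<Longrightarrow> evalw H f a = evalw H f b"
proof -
  assume "(a, b) \<in> S"
  then obtain u v r where ab: "a = u @ v" "b = u @ r @ v" "u \<in> Wd" "v \<in> Wd"
    and r: "r \<in> R \<union> {[(i, b), (i, \<not> b)] | i b. i \<in> I}"
    unfolding pres_step_def by blast
  have rw: "r \<in> Wd" using r R_words by auto
  have "evalw H f r = \<one>"
    using r fR f by (auto simp: Pi_iff)
  then show ?thesis using ab rw evalw_append evalw_carrier by simp
qed

lemma evalw_rel: "(a, b) \<in> rel \<Longrightarrow> evalw H f a = evalw H f b"
proof -
  assume "(a, b) \<in> rel"
  then have "(a, b) \<in> (S \<union> S\<inverse>)\<^sup>*" by (simp add: pres_rel_def)
  then show ?thesis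
    by (induction rule: rtrancl_induct) (auto dest: evalw_step)
qed

definition lift :: "('a \<times> bool) list set \<Rightarrow> 'b" where
  "lift A = evalw H f (SOME w. w \<in> A)"

lemma lift_cls: "w \<in> Wd \<Longrightarrow> lift (cls w) = evalw H f w"
proof -
  assume w: "w \<in> Wd"
  have "(SOME x. x \<in> cls w) \<in> cls w" using mem_cls[OF w] by (rule someI)
  then have "(w, SOME x. x \<in> cls w) \<in> rel" by (simp add: cls_def)
  then show ?thesis unfolding lift_def by (simp add: evalw_rel)
qed

lemma lift_hom: "lift \<in> hom G H"
proof (rule homI)
  fix x assume "x \<in> carrier G"
  then show "lift x \<in> carrier H" by (auto elim!: carrier_cls simp: lift_cls evalw_carrier)
next
  fix x y assume "x \<in> carrier G" "y \<in> carrier G"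
  then show "lift (x \<otimes>\<^bsub>G\<^esub> y) = lift x \<otimes> lift y"
    by (auto elim!: carrier_cls simp: lift_cls cls_mult evalw_append)
qed

lemma lift_gen: "i \<in> I \<Longrightarrow> lift (gen i) = f i"
  unfolding gen_def using f by (simp add: lift_cls Pi_iff)

end
end

lemma universal:
  assumes "group H" "f \<in> I \<rightarrow> carrier H" "\<And>r. r \<in> R \<Longrightarrow> evalw H f r = \<one>\<^bsub>H\<^esub>"
  shows "\<exists>h. h \<in> hom G H \<and> (\<forall>i\<in>I. h (gen i) = f i)"
  using lift_hom[OF assms] lift_gen[OF assms] by blast

lemma carrier_induct:
  assumes "x \<in> carrier G" "P \<one>\<^bsub>G\<^esub>"
    and "\<And>i y. i \<in> I \<Longrightarrow> y \<in> carrier G \<Longrightarrow> P y \<Longrightarrow> P (gen i \<otimes>\<^bsub>G\<^esub> y)"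
    and "\<And>i y. i \<in> I \<Longrightarrow> y \<in> carrier G \<Longrightarrow> P y \<Longrightarrow> P (inv\<^bsub>G\<^esub> gen i \<otimes>\<^bsub>G\<^esub> y)"
  shows "P x"
proof -
  have "P (cls w)" if "w \<in> Wd" for w
    using that
  proof (induction w)
    case Nil then show ?case using assms(2) by (simp add: one_G)
  next
    case (Cons c w)
    obtain i b where c: "c = (i, b)" by (cases c)
    have i: "i \<in> I" and w: "w \<in> Wd" using Cons.prems c by auto
    show ?case using Cons.IH[OF w] assms(3,4)[OF i cls_in_carrier[OF w]] c i w
      by (cases b) (auto simp: cls_Cons_True cls_Cons_False)
  qed
  then show ?thesis using assms(1) by (auto elim: carrier_cls)
qed

end

context pres
begin

lemma replicate_words[simp]: "i \<in> I \<Longrightarrow> replicate k (i, b) \<in> Wd"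
  by (auto simp: pres_words_def)

lemma evalw_replicate:
  assumes "group H" "f \<in> I \<rightarrow> carrier H" "i \<in> I"
  shows "evalw H f (replicate k (i, True)) = f i [^]\<^bsub>H\<^esub> k"
proof -
  interpret H: group H by fact
  have fi: "f i \<in> carrier H" using assms by auto
  show ?thesis by (induction k) (auto simp: fi H.nat_pow_Suc2 simp del: nat_pow_Suc H.nat_pow_Suc)
qed

lemma evalw_concat_replicate:
  assumes "group H" "f \<in> I \<rightarrow> carrier H" "i \<in> I" "j \<in> I"
  shows "evalw H f (concat (replicate k [(i, True), (j, True)])) = (f i \<otimes>\<^bsub>H\<^esub> f j) [^]\<^bsub>H\<^esub> k"
proof -
  interpret H: group H by fact
  have fi: "f i \<in> carrier H" "f j \<in> carrier H" using assms by auto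
  have w: "concat (replicate k [(i, True), (j, True)]) \<in> Wd" for k
    using assms by (auto simp: pres_words_def)
  show ?thesis
  proof (induction k)
    case 0 then show ?case by simp
  next
    case (Suc k)
    have "evalw H f (concat (replicate (Suc k) [(i, True), (j, True)]))
       = f i \<otimes>\<^bsub>H\<^esub> (f j \<otimes>\<^bsub>H\<^esub> evalw H f (concat (replicate k [(i, True), (j, True)])))"
      by simp
    also have "\<dots> = (f i \<otimes>\<^bsub>H\<^esub> f j) [^]\<^bsub>H\<^esub> Suc k"
      using Suc fi by (simp add: H.nat_pow_Suc2 H.m_assoc del: nat_pow_Suc H.nat_pow_Suc)
    finally show ?case .
  qed
qed

lemma cls_replicate: "i \<in> I \<Longrightarrow> cls (replicate k (i, True)) = gen i [^]\<^bsub>G\<^esub> k"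
proof (induction k)
  case 0 then show ?case by (simp add: one_G)
next
  case (Suc k)
  interpret group G by (rule group_G)
  have "gen i \<otimes>\<^bsub>G\<^esub> gen i [^]\<^bsub>G\<^esub> k = gen i [^]\<^bsub>G\<^esub> Suc k"
    by (rule nat_pow_Suc2[symmetric]) (use gen_carrier Suc.prems in auto)
  then show ?case using Suc by (simp add: cls_Cons_True gen_carrier del: nat_pow_Suc)
qed

end

definition fpc_R :: "nat list \<Rightarrow> (nat \<times> bool) list set" where
  "fpc_R ms = {replicate (ms ! l) (l, True) | l. l < length ms}"

locale fpc =
  fixes ms :: "nat list"
  assumes ms_ge: "\<And>l. l < length ms \<Longrightarrow> 2 \<le> ms ! l"
begin

sublocale pres "{..<length ms}" "fpc_R ms"
  by unfold_locales (auto simp: fpc_R_def pres_words_def)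

abbreviation "L \<equiv> length ms"

lemma F_eq: "free_product_cyclic ms = G"
  by (simp add: free_product_cyclic_def fpc_R_def)

fun red :: "(nat \<times> nat) list \<Rightarrow> bool" where
  "red [] = True"
| "red ((l, k) # z) = (l < L \<and> 0 < k \<and> k < ms ! l \<and> red z \<and> (case z of [] \<Rightarrow> True | (l', _) # _ \<Rightarrow> l' \<noteq> l))"

fun act :: "nat \<Rightarrow> nat \<Rightarrow> (nat \<times> nat) list \<Rightarrow> (nat \<times> nat) list" where
  "act l k [] = (if k mod ms ! l = 0 then [] else [(l, k mod ms ! l)])"
| "act l k ((l', k') # z) =
    (if l = l' then (if (k + k') mod ms ! l = 0 then z else (l, (k + k') mod ms ! l) # z)
     else (if k mod ms ! l = 0 then (l', k') # z else (l, k mod ms ! l) # (l', k') # z))"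

definition hdi :: "(nat \<times> nat) list \<Rightarrow> nat option" where
  "hdi z = (case z of [] \<Rightarrow> None | (l, _) # _ \<Rightarrow> Some l)"

lemma red_Cons_iff: "red ((l, k) # z) \<longleftrightarrow> l < L \<and> 0 < k \<and> k < ms ! l \<and> red z \<and> hdi z \<noteq> Some l"
  by (auto simp: hdi_def split: list.splits)

lemma act_other: "red z \<Longrightarrow> hdi z \<noteq> Some l \<Longrightarrow>
   act l k z = (if k mod ms ! l = 0 then z else (l, k mod ms ! l) # z)"
  by (cases z) (auto simp: hdi_def)

lemma act_red: "red z \<Longrightarrow> l < L \<Longrightarrow> red (act l k z)"
proof (cases z)
  case Nil
  assume "l < L"
  then show ?thesis using Nil ms_ge[of l] by (auto simp: hdi_def)
next
  case (Cons p z')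
  obtain l' k' where p: "p = (l', k')" by (cases p)
  assume r: "red z" and l: "l < L"
  have m: "2 \<le> ms ! l" using ms_ge l by auto
  show ?thesis
  proof (cases "l = l'")
    case True
    then show ?thesis using r l m Cons p by (auto simp: red_Cons_iff)
  next
    case False
    then show ?thesis using r l m Cons p by (auto simp: red_Cons_iff hdi_def)
  qed
qed

lemma act_0: "red z \<Longrightarrow> l < L \<Longrightarrow> k mod ms ! l = 0 \<Longrightarrow> act l k z = z"
proof (cases z)
  case (Cons p z')
  obtain l' k' where p: "p = (l', k')" by (cases p)
  assume r: "red z" and l: "l < L" and k: "k mod ms ! l = 0"
  show ?thesis
  proof (cases "l = l'")
    case True
    then have "(k + k') mod ms ! l = k'" using r Cons p k by (auto simp: mod_add_left_eq[symmetric])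
    then show ?thesis using True r Cons p by auto
  qed (use Cons p k in auto)
qed auto

lemma act_act: "red z \<Longrightarrow> l < L \<Longrightarrow> act l a (act l b z) = act l (a + b) z"
proof -
  assume r: "red z" and l: "l < L"
  define m where "m = ms ! l"
  have m: "2 \<le> m" using ms_ge l m_def by auto
  show ?thesis
  proof (cases "hdi z = Some l")
    case False
    then have ab: "act l b z = (if b mod m = 0 then z else (l, b mod m) # z)"
      using act_other r m_def by auto
    show ?thesis
    proof (cases "b mod m = 0")
      case True
      then show ?thesis using ab act_other[OF r False] m_def
        by (auto simp: mod_add_right_eq[symmetric])
    next
      case bF: False
      have "act l a ((l, b mod m) # z) = act l (a + b) z"
        using act_other[OF r False] m_def by (auto simp: mod_add_right_eq)
      then show ?thesis using ab bF by simp
    qed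
  next
    case True
    then obtain k' z' where z: "z = (l, k') # z'" by (auto simp: hdi_def split: list.splits)
    have z': "red z'" "hdi z' \<noteq> Some l" and k': "k' < m" using r z red_Cons_iff m_def by auto
    show ?thesis
    proof (cases "(b + k') mod m = 0")
      case True
      then have "(a + b + k') mod m = a mod m" by (metis add.assoc mod_add_right_eq add.right_neutral)
      then show ?thesis using True z act_other[OF z'] m_def by (auto simp: add.assoc)
    next
      case False
      have "(a + (b + k') mod m) mod m = (a + b + k') mod m" by (simp add: mod_add_right_eq add.assoc)
      then show ?thesis using False z m_def by (auto simp: add.assoc)
    qed
  qed
qed

definition acts :: "(nat \<times> bool) list \<Rightarrow> (nat \<times> nat) list \<Rightarrow> (nat \<times> nat) list" where
  "acts w z = foldr (\<lambda>(l, b) z. act l (if b then 1 else ms ! l - 1) z) w z"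

lemma acts_simps[simp]: "acts [] z = z" "acts ((l, b) # w) z = act l (if b then 1 else ms ! l - 1) (acts w z)"
  by (simp_all add: acts_def)

lemma acts_append: "acts (u @ v) z = acts u (acts v z)"
  by (simp add: acts_def)

lemma acts_red: "w \<in> Wd \<Longrightarrow> red z \<Longrightarrow> red (acts w z)"
  by (induction w) (auto intro: act_red)

lemma acts_replicate: "l < L \<Longrightarrow> red z \<Longrightarrow> acts (replicate k (l, True)) z = act l k z"
proof (induction k)
  case 0 then show ?case by (simp add: act_0)
next
  case (Suc k)
  then show ?case by (simp add: act_act)
qed

lemma acts_R: "r \<in> fpc_R ms \<Longrightarrow> red z \<Longrightarrow> acts r z = z"
  by (auto simp: fpc_R_def acts_replicate act_0)

lemma acts_triv: "l < L \<Longrightarrow> red z \<Longrightarrow> acts [(l, b), (l, \<not> b)] z = z"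
proof -
  assume l: "l < L" and z: "red z"
  have m: "2 \<le> ms ! l" using ms_ge l by auto
  have "1 + (ms ! l - 1) = ms ! l" "ms ! l - 1 + 1 = ms ! l" using m by auto
  then show ?thesis using l z m by (cases b) (auto simp: act_act act_0)
qed

definition nf :: "(nat \<times> bool) list \<Rightarrow> (nat \<times> nat) list" where
  "nf w = acts w []"

lemma nf_red: "w \<in> Wd \<Longrightarrow> red (nf w)"
  by (simp add: nf_def acts_red)

lemma nf_append: "nf (u @ v) = acts u (nf v)"
  by (simp add: nf_def acts_append)

lemma nf_replicate: "l < L \<Longrightarrow> nf (replicate k (l, True)) = act l k []"
  by (simp add: nf_def acts_replicate)

lemma acts_step: "(a, b) \<in> S \<Longrightarrow> red z \<Longrightarrow> acts a z = acts b z"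
proof -
  assume "(a, b) \<in> S" and z: "red z"
  then obtain u v r where ab: "a = u @ v" "b = u @ r @ v" "u \<in> Wd" "v \<in> Wd"
    and r: "r \<in> fpc_R ms \<union> {[(i, b), (i, \<not> b)] | i b. i \<in> {..<L}}"
    unfolding pres_step_def by blast
  have "red (acts v z)" using acts_red ab z by auto
  then have "acts r (acts v z) = acts v z" using r acts_R acts_triv by auto
  then show ?thesis using ab by (simp add: acts_append)
qed

lemma nf_rel: "(a, b) \<in> rel \<Longrightarrow> nf a = nf b"
proof -
  assume "(a, b) \<in> rel"
  then have "(a, b) \<in> (S \<union> S\<inverse>)\<^sup>*" by (simp add: pres_rel_def)
  then show ?thesis unfolding nf_def
    by (induction rule: rtrancl_induct) (auto dest!: acts_step[of _ _ "[]"])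
qed

definition word_of :: "(nat \<times> nat) list \<Rightarrow> (nat \<times> bool) list" where
  "word_of z = concat (map (\<lambda>(l, k). replicate k (l, True)) z)"

lemma word_of_simps[simp]: "word_of [] = []" "word_of ((l, k) # z) = replicate k (l, True) @ word_of z"
  by (simp_all add: word_of_def)

lemma word_of_append: "word_of (a @ b) = word_of a @ word_of b"
  by (simp add: word_of_def)

lemma word_of_words: "red z \<Longrightarrow> word_of z \<in> Wd"
  by (induction z rule: red.induct) (auto simp: pres_words_def)

interpretation Gg: group G by (rule group_G)

lemma gen_pow_ms: "l < L \<Longrightarrow> gen l [^]\<^bsub>G\<^esub> (ms ! l) = \<one>\<^bsub>G\<^esub>"
proof -
  assume l: "l < L"
  have "replicate (ms ! l) (l, True) \<in> fpc_R ms" using l by (auto simp: fpc_R_def)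
  then have "cls (replicate (ms ! l) (l, True)) = cls []" by (intro cls_eqI rel_R)
  then show ?thesis using l by (simp add: cls_replicate one_G)
qed

lemma gen_pow_mod: "l < L \<Longrightarrow> gen l [^]\<^bsub>G\<^esub> k = gen l [^]\<^bsub>G\<^esub> (k mod ms ! l)"
proof -
  assume l: "l < L"
  have "k = ms ! l * (k div ms ! l) + k mod ms ! l" by simp
  then have "gen l [^]\<^bsub>G\<^esub> k = (gen l [^]\<^bsub>G\<^esub> (ms ! l)) [^]\<^bsub>G\<^esub> (k div ms ! l) \<otimes>\<^bsub>G\<^esub> gen l [^]\<^bsub>G\<^esub> (k mod ms ! l)"
    using l gen_carrier by (metis Gg.nat_pow_mult Gg.nat_pow_pow lessThan_iff)
  then show ?thesis using l gen_pow_ms gen_carrier by simp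
qed

lemma cls_word_of_act: "red z \<Longrightarrow> l < L \<Longrightarrow>
  cls (word_of (act l k z)) = gen l [^]\<^bsub>G\<^esub> k \<otimes>\<^bsub>G\<^esub> cls (word_of z)"
proof -
  assume r: "red z" and l: "l < L"
  define m where "m = ms ! l"
  have m: "2 \<le> m" using ms_ge l m_def by auto
  have g: "gen l \<in> carrier G" using l gen_carrier by auto
  have wz: "word_of z \<in> Wd" using word_of_words r by auto
  have cz: "cls (word_of z) \<in> carrier G" using cls_in_carrier wz by auto
  have cons: "cls (word_of ((l, j) # z')) = gen l [^]\<^bsub>G\<^esub> j \<otimes>\<^bsub>G\<^esub> cls (word_of z')" if "red z'" for j z'
    using that l by (simp add: cls_replicate[symmetric] cls_mult word_of_words)
  show ?thesis
  proof (cases "hdi z = Some l")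
    case False
    then show ?thesis using act_other[OF r False] cons[OF r] gen_pow_mod[OF l, of k] cz g
      by (auto simp: m_def)
  next
    case True
    then obtain k' z' where z: "z = (l, k') # z'" by (auto simp: hdi_def split: list.splits)
    have z': "red z'" using r z by auto
    have cz': "cls (word_of z') \<in> carrier G" using cls_in_carrier word_of_words z' by auto
    have e: "gen l [^]\<^bsub>G\<^esub> k \<otimes>\<^bsub>G\<^esub> cls (word_of z) = gen l [^]\<^bsub>G\<^esub> (k + k') \<otimes>\<^bsub>G\<^esub> cls (word_of z')"
      using cons[OF z'] z g cz' by (simp add: Gg.m_assoc[symmetric] Gg.nat_pow_mult)
    show ?thesis
      using e gen_pow_mod[OF l, of "k + k'"] cons[OF z'] z g cz' by (auto simp: m_def)
  qed
qed

lemma cls_nf: "w \<in> Wd \<Longrightarrow> cls (word_of (nf w)) = cls w"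
proof (induction w)
  case Nil then show ?case by (simp add: nf_def)
next
  case (Cons c w)
  obtain l b where c: "c = (l, b)" by (cases c)
  have l: "l < L" and w: "w \<in> Wd" using Cons.prems c by auto
  have r: "red (nf w)" using nf_red w by auto
  have g: "gen l \<in> carrier G" using l gen_carrier by auto
  have m: "2 \<le> ms ! l" using ms_ge l by auto
  have nfc: "nf (c # w) = act l (if b then 1 else ms ! l - 1) (nf w)"
    using c by (simp add: nf_def)
  show ?case
  proof (cases b)
    case True
    then show ?thesis using nfc cls_word_of_act[OF r l] Cons.IH[OF w] c l w
      by (simp add: cls_Cons_True g)
  next
    case False
    have "gen l [^]\<^bsub>G\<^esub> (ms ! l - 1) = inv\<^bsub>G\<^esub> gen l"
    proof -
      have "gen l [^]\<^bsub>G\<^esub> (ms ! l - 1) \<otimes>\<^bsub>G\<^esub> gen l = \<one>\<^bsub>G\<^esub>"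
        using gen_pow_ms[OF l] m g by (metis Gg.nat_pow_Suc Suc_diff_1 le_trans one_le_numeral not_one_le_zero gr0I)
      then show ?thesis using g by (simp add: Gg.inv_equality)
    qed
    then show ?thesis using nfc cls_word_of_act[OF r l] Cons.IH[OF w] c l w False
      by (simp add: cls_Cons_False g)
  qed
qed

definition NF :: "(nat \<times> bool) list set \<Rightarrow> (nat \<times> nat) list" where
  "NF A = nf (SOME w. w \<in> A)"

lemma NF_cls: "w \<in> Wd \<Longrightarrow> NF (cls w) = nf w"
proof -
  assume w: "w \<in> Wd"
  have "(SOME x. x \<in> cls w) \<in> cls w" using mem_cls[OF w] by (rule someI)
  then have "(w, SOME x. x \<in> cls w) \<in> rel" by (simp add: cls_def)
  then show ?thesis unfolding NF_def by (simp add: nf_rel)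
qed

lemma NF_red: "x \<in> carrier G \<Longrightarrow> red (NF x)"
  by (auto elim!: carrier_cls simp: NF_cls nf_red)

lemma NF_inv: "x \<in> carrier G \<Longrightarrow> cls (word_of (NF x)) = x"
  by (auto elim!: carrier_cls simp: NF_cls cls_nf)

lemma NF_eq: "x \<in> carrier G \<Longrightarrow> y \<in> carrier G \<Longrightarrow> NF x = NF y \<Longrightarrow> x = y"
  using NF_inv by metis

lemma nf_word_of: "red z \<Longrightarrow> nf (word_of z) = z"
proof (induction z rule: red.induct)
  case 1 then show ?case by (simp add: nf_def)
next
  case (2 l k z)
  have l: "l < L" and z: "red z" and h: "hdi z \<noteq> Some l" and k: "0 < k" "k < ms ! l"
    using 2(2) red_Cons_iff by auto
  have "nf (word_of ((l, k) # z)) = act l k z"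
    using 2(1)[OF z] l z by (simp add: nf_append acts_replicate)
  then show ?case using act_other[OF z h] k by simp
qed

lemma NF_word_of: "red z \<Longrightarrow> NF (cls (word_of z)) = z"
  by (simp add: NF_cls word_of_words nf_word_of)

lemma acts_word_of: "red (r @ z) \<Longrightarrow> acts (word_of r) z = r @ z"
proof (induction r)
  case Nil then show ?case by simp
next
  case (Cons p r)
  obtain l k where p: "p = (l, k)" by (cases p)
  have l: "l < L" and rz: "red (r @ z)" and h: "hdi (r @ z) \<noteq> Some l" and k: "0 < k" "k < ms ! l"
    using Cons.prems p red_Cons_iff by auto
  have "acts (word_of (p # r)) z = act l k (r @ z)"
    using Cons.IH[OF rz] l rz p by (simp add: acts_append acts_replicate)
  then show ?case using act_other[OF rz h] k p by simp
qed

lemma red_append: "red (a @ b) \<longleftrightarrow> red a \<and> red b \<and> (a = [] \<or> b = [] \<or> fst (last a) \<noteq> fst (hd b))"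
proof (induction a)
  case Nil then show ?case by simp
next
  case (Cons p a)
  obtain l k where p: "p = (l, k)" by (cases p)
  show ?case using Cons p
    by (cases a; cases b) (auto simp: red_Cons_iff hdi_def split: list.splits)
qed

lemma key:
  assumes u: "u \<in> carrier G" and a: "a < L" and s: "s mod ms ! a \<noteq> 0" and t: "t mod ms ! a \<noteq> 0"
    and eq: "u \<otimes>\<^bsub>G\<^esub> gen a [^]\<^bsub>G\<^esub> t = gen a [^]\<^bsub>G\<^esub> s \<otimes>\<^bsub>G\<^esub> u"
    and ne: "NF u \<noteq> []"
  shows "fst (hd (NF u)) = a"
proof (rule ccontr)
  assume hne: "fst (hd (NF u)) \<noteq> a"
  define r where "r = NF u"
  have rr: "red r" using NF_red u r_def by auto
  have uu: "u = cls (word_of r)" using NF_inv u r_def by auto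
  have wr: "word_of r \<in> Wd" using word_of_words rr by auto
  have ra: "replicate k (a, True) \<in> Wd" for k using a by (auto simp: pres_words_def)
  have hdr: "hdi r \<noteq> Some a" using hne ne r_def by (auto simp: hdi_def split: list.splits)
  have "NF (gen a [^]\<^bsub>G\<^esub> s \<otimes>\<^bsub>G\<^esub> u) = act a s r"
    using a uu wr rr ra by (simp add: cls_replicate[symmetric] cls_mult NF_cls nf_append acts_replicate nf_word_of)
  also have "\<dots> = (a, s mod ms ! a) # r" using act_other[OF rr hdr] s by simp
  finally have R: "NF (gen a [^]\<^bsub>G\<^esub> s \<otimes>\<^bsub>G\<^esub> u) = (a, s mod ms ! a) # r" .
  have "NF (u \<otimes>\<^bsub>G\<^esub> gen a [^]\<^bsub>G\<^esub> t) = acts (word_of r) (act a t [])"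
    using a uu wr rr ra by (simp add: cls_replicate[symmetric] cls_mult NF_cls nf_append nf_replicate del: act.simps)
  also have "act a t [] = [(a, t mod ms ! a)]" using t by simp
  finally have Lq: "NF (u \<otimes>\<^bsub>G\<^esub> gen a [^]\<^bsub>G\<^esub> t) = acts (word_of r) [(a, t mod ms ! a)]" .
  have rne: "r \<noteq> []" using ne r_def by simp
  have m: "2 \<le> ms ! a" using ms_ge a by auto
  show False
  proof (cases "fst (last r) = a")
    case False
    have "red (r @ [(a, t mod ms ! a)])" using rr False t a m by (auto simp: red_append)
    then have "acts (word_of r) [(a, t mod ms ! a)] = r @ [(a, t mod ms ! a)]" by (rule acts_word_of)
    then have "(a, s mod ms ! a) # r = r @ [(a, t mod ms ! a)]" using eq R Lq by simp
    then have "hd ((a, s mod ms ! a) # r) = hd (r @ [(a, t mod ms ! a)])" by (rule arg_cong)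
    then have "hd r = (a, s mod ms ! a)" using rne by simp
    then show False using rne hne r_def by simp
  next
    case True
    obtain r0 p where rp: "r = r0 @ [p]" using rne by (metis rev_exhaust)
    obtain k0 where p: "p = (a, k0)" using True rp by (cases p) auto
    have r0: "red r0" and r0a: "r0 = [] \<or> fst (last r0) \<noteq> a" and ka: "red [(a, k0)]"
      using rr rp p by (auto simp: red_append)
    have "acts (word_of r) [(a, t mod ms ! a)] = acts (word_of r0) (act a k0 [(a, t mod ms ! a)])"
    proof -
      have "red [(a, t mod ms ! a)]" using t a m by simp
      then show ?thesis using rp p a by (simp add: word_of_append acts_append acts_replicate del: act.simps)
    qed
    moreover have c: "act a k0 [(a, t mod ms ! a)] = [] \<or> (\<exists>j. act a k0 [(a, t mod ms ! a)] = [(a, j)] \<and> red [(a, j)])"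
      using a m by (auto simp: red_Cons_iff hdi_def)
    moreover have "red (r0 @ act a k0 [(a, t mod ms ! a)])"
      using c r0 r0a by (auto simp: red_append)
    ultimately have "acts (word_of r) [(a, t mod ms ! a)] = r0 @ act a k0 [(a, t mod ms ! a)]"
      using acts_word_of by simp
    then have "length (NF (u \<otimes>\<^bsub>G\<^esub> gen a [^]\<^bsub>G\<^esub> t)) \<le> length r0 + 1" using Lq c by auto
    moreover have "length (NF (gen a [^]\<^bsub>G\<^esub> s \<otimes>\<^bsub>G\<^esub> u)) = length r0 + 2" using R rp by simp
    ultimately show False using eq by simp
  qed
qed

end

lemma Aut_mult: "f \<in> auto G \<Longrightarrow> g \<in> auto G \<Longrightarrow> f \<otimes>\<^bsub>AutoGroup G\<^esub> g = compose (carrier G) f g"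
  by (simp add: AutoGroup_def BijGroup_def auto_def)

lemma Aut_one: "\<one>\<^bsub>AutoGroup G\<^esub> = (\<lambda>x\<in>carrier G. x)"
  by (simp add: AutoGroup_def BijGroup_def)

lemma Aut_carrier: "carrier (AutoGroup G) = auto G"
  by (simp add: AutoGroup_def)

lemma auto_ext: "f \<in> auto G \<Longrightarrow> g \<in> auto G \<Longrightarrow> (\<And>x. x \<in> carrier G \<Longrightarrow> f x = g x) \<Longrightarrow> f = g"
  by (auto simp: auto_def Bij_def intro: extensionalityI)

context fpc
begin

interpretation Gg: group G by (rule group_G)

abbreviation "Aut \<equiv> AutoGroup G"

lemma group_Aut: "group Aut" by (rule Gg.AutoGroup)

interpretation A: group Aut by (rule group_Aut)

lemma inv_cancel_simps[simp]:
  "g \<in> carrier G \<Longrightarrow> z \<in> carrier G \<Longrightarrow> inv\<^bsub>G\<^esub> g \<otimes>\<^bsub>G\<^esub> (g \<otimes>\<^bsub>G\<^esub> z) = z"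
  "g \<in> carrier G \<Longrightarrow> z \<in> carrier G \<Longrightarrow> g \<otimes>\<^bsub>G\<^esub> (inv\<^bsub>G\<^esub> g \<otimes>\<^bsub>G\<^esub> z) = z"
  by (simp_all add: Gg.m_assoc[symmetric])

definition Cj :: "(nat \<times> bool) list set \<Rightarrow> ((nat \<times> bool) list set \<Rightarrow> (nat \<times> bool) list set)" where
  "Cj g = (\<lambda>x\<in>carrier G. g \<otimes>\<^bsub>G\<^esub> x \<otimes>\<^bsub>G\<^esub> inv\<^bsub>G\<^esub> g)"

lemma Cj_apply: "x \<in> carrier G \<Longrightarrow> Cj g x = g \<otimes>\<^bsub>G\<^esub> x \<otimes>\<^bsub>G\<^esub> inv\<^bsub>G\<^esub> g"
  by (simp add: Cj_def)

lemma Cj_auto: "g \<in> carrier G \<Longrightarrow> Cj g \<in> auto G"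
proof -
  assume g: "g \<in> carrier G"
  have hom: "Cj g \<in> hom G G"
    by (rule homI) (auto simp: Cj_apply g Gg.m_assoc)
  have inv: "Cj (inv\<^bsub>G\<^esub> g) (Cj g x) = x" "Cj g (Cj (inv\<^bsub>G\<^esub> g) x) = x" if "x \<in> carrier G" for x
    using that g by (simp_all add: Cj_apply Gg.m_assoc)
  have "bij_betw (Cj g) (carrier G) (carrier G)"
    by (rule bij_betwI[where g="Cj (inv\<^bsub>G\<^esub> g)"]) (use inv g in \<open>auto simp: Cj_apply\<close>)
  then show ?thesis using hom by (simp add: auto_def Bij_def Cj_def)
qed

lemma Aut_closed: "f \<in> auto G \<Longrightarrow> g \<in> auto G \<Longrightarrow> f \<otimes>\<^bsub>Aut\<^esub> g \<in> auto G"
  using A.m_closed by (simp add: Aut_carrier)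

lemma Aut_apply: "f \<in> auto G \<Longrightarrow> g \<in> auto G \<Longrightarrow> x \<in> carrier G \<Longrightarrow> (f \<otimes>\<^bsub>Aut\<^esub> g) x = f (g x)"
  by (simp add: Aut_mult compose_def)

lemma auto_in_carrier: "f \<in> auto G \<Longrightarrow> x \<in> carrier G \<Longrightarrow> f x \<in> carrier G"
  by (auto simp: auto_def hom_def)

lemma auto_hom: "f \<in> auto G \<Longrightarrow> x \<in> carrier G \<Longrightarrow> y \<in> carrier G \<Longrightarrow> f (x \<otimes>\<^bsub>G\<^esub> y) = f x \<otimes>\<^bsub>G\<^esub> f y"
  by (auto simp: auto_def hom_def)

lemma auto_inv: "f \<in> auto G \<Longrightarrow> x \<in> carrier G \<Longrightarrow> f (inv\<^bsub>G\<^esub> x) = inv\<^bsub>G\<^esub> f x"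
  using group_hom.hom_inv[of G G f] by (auto simp: auto_def group_hom_def group_hom_axioms_def Gg.is_group)

lemma one_auto: "\<one>\<^bsub>Aut\<^esub> \<in> auto G"
  using A.one_closed by (simp add: Aut_carrier)

lemma Aut_one_apply: "x \<in> carrier G \<Longrightarrow> \<one>\<^bsub>Aut\<^esub> x = x"
  by (simp add: Aut_one)

lemma Cj_mult: "g \<in> carrier G \<Longrightarrow> h \<in> carrier G \<Longrightarrow> Cj (g \<otimes>\<^bsub>G\<^esub> h) = Cj g \<otimes>\<^bsub>Aut\<^esub> Cj h"
  by (rule auto_ext[where G=G]) (simp_all add: Cj_auto Aut_closed Aut_apply Cj_apply Gg.m_assoc Gg.inv_mult_group)

lemma Cj_one: "Cj \<one>\<^bsub>G\<^esub> = \<one>\<^bsub>Aut\<^esub>"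
  by (rule auto_ext[where G=G]) (simp_all add: Cj_auto one_auto Aut_one_apply Cj_apply)

lemma Cj_hom: "Cj \<in> hom G Aut"
  by (rule homI) (auto simp: Cj_mult Aut_carrier Cj_auto)

lemma Cj_inv: "g \<in> carrier G \<Longrightarrow> Cj (inv\<^bsub>G\<^esub> g) = inv\<^bsub>Aut\<^esub> Cj g"
  using group_hom.hom_inv[of G Aut Cj] Cj_hom group_Aut
  by (auto simp: group_hom_def group_hom_axioms_def Gg.is_group)

lemma Cj_pow: "g \<in> carrier G \<Longrightarrow> Cj (g [^]\<^bsub>G\<^esub> (k::nat)) = Cj g [^]\<^bsub>Aut\<^esub> k"
  using group_hom.hom_nat_pow[of G Aut Cj] Cj_hom group_Aut
  by (auto simp: group_hom_def group_hom_axioms_def Gg.is_group)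

lemma iota_ex: "\<exists>h. h \<in> hom G G \<and> (\<forall>l<L. h (gen l) = inv\<^bsub>G\<^esub> gen l)"
proof -
  have f: "(\<lambda>l. inv\<^bsub>G\<^esub> gen l) \<in> {..<L} \<rightarrow> carrier G" using gen_carrier by auto
  have R: "evalw G (\<lambda>l. inv\<^bsub>G\<^esub> gen l) r = \<one>\<^bsub>G\<^esub>" if "r \<in> fpc_R ms" for r
  proof -
    have "\<exists>l. l < L \<and> r = replicate (ms ! l) (l, True)" using that by (auto simp: fpc_R_def)
    then obtain l where l: "l < L" "r = replicate (ms ! l) (l, True)" by blast
    have g: "gen l \<in> carrier G" using l(1) by (simp add: gen_carrier)
    have "evalw G (\<lambda>l. inv\<^bsub>G\<^esub> gen l) r = (inv\<^bsub>G\<^esub> gen l) [^]\<^bsub>G\<^esub> (ms ! l)"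
      unfolding l(2) by (rule evalw_replicate[OF group_G f]) (use l in simp)
    also have "\<dots> = inv\<^bsub>G\<^esub> (gen l [^]\<^bsub>G\<^esub> (ms ! l))" by (rule Gg.nat_pow_inv[OF g])
    also have "\<dots> = \<one>\<^bsub>G\<^esub>" using gen_pow_ms[OF l(1)] by simp
    finally show ?thesis .
  qed
  obtain h where "h \<in> hom G G" "\<forall>i\<in>{..<L}. h (gen i) = inv\<^bsub>G\<^esub> gen i"
    using universal[OF group_G f R] by blast
  then show ?thesis by blast
qed

definition iota where "iota = (SOME h. h \<in> hom G G \<and> (\<forall>l<L. h (gen l) = inv\<^bsub>G\<^esub> gen l))"

lemma iota: "iota \<in> hom G G" "\<And>l. l < L \<Longrightarrow> iota (gen l) = inv\<^bsub>G\<^esub> gen l"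
  using someI_ex[OF iota_ex] unfolding iota_def by auto

lemma iota_carrier: "x \<in> carrier G \<Longrightarrow> iota x \<in> carrier G"
  using iota(1) by (auto simp: hom_def)

lemma iota_mult: "x \<in> carrier G \<Longrightarrow> y \<in> carrier G \<Longrightarrow> iota (x \<otimes>\<^bsub>G\<^esub> y) = iota x \<otimes>\<^bsub>G\<^esub> iota y"
  using iota(1) by (auto simp: hom_def)

lemma iota_inv: "x \<in> carrier G \<Longrightarrow> iota (inv\<^bsub>G\<^esub> x) = inv\<^bsub>G\<^esub> iota x"
  using group_hom.hom_inv[of G G iota] iota(1) by (auto simp: group_hom_def group_hom_axioms_def Gg.is_group)

lemma iota_iota: "x \<in> carrier G \<Longrightarrow> iota (iota x) = x"
proof -
  assume x: "x \<in> carrier G"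
  have "(iota \<circ> iota) x = (\<lambda>x. x) x"
  proof (rule hom_ext[OF group_G _ _ _ x])
    show "iota \<circ> iota \<in> hom G G" by (rule hom_compose[OF iota(1) iota(1)])
    show "(\<lambda>x. x) \<in> hom G G" by (rule homI) auto
    fix l assume "l \<in> {..<L}"
    then show "(iota \<circ> iota) (gen l) = gen l"
      by (simp add: iota iota_inv gen_carrier)
  qed
  then show ?thesis by simp
qed

definition T where "T = restrict iota (carrier G)"

lemma T_apply: "x \<in> carrier G \<Longrightarrow> T x = iota x" by (simp add: T_def)

lemma T_auto: "T \<in> auto G"
proof -
  have hom: "T \<in> hom G G" by (rule homI) (auto simp: T_apply iota_carrier iota_mult)
  have "bij_betw T (carrier G) (carrier G)"
    by (rule bij_betwI[where g=T]) (auto simp: T_apply iota_carrier iota_iota)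
  then show ?thesis using hom by (simp add: auto_def Bij_def T_def)
qed

lemma TT: "T \<otimes>\<^bsub>Aut\<^esub> T = \<one>\<^bsub>Aut\<^esub>"
  by (rule auto_ext[where G=G]) (simp_all add: T_auto one_auto Aut_closed Aut_apply Aut_one_apply T_apply iota_carrier iota_iota)

lemma T_Cj: "g \<in> carrier G \<Longrightarrow> T \<otimes>\<^bsub>Aut\<^esub> Cj g = Cj (iota g) \<otimes>\<^bsub>Aut\<^esub> T"
  by (rule auto_ext[where G=G]) (simp_all add: T_auto Cj_auto iota_carrier Aut_closed Aut_apply T_apply Cj_apply iota_mult iota_inv)

lemma NF_gen_pow: "l < L \<Longrightarrow> NF (gen l [^]\<^bsub>G\<^esub> k) = act l k []"
  by (simp add: cls_replicate[symmetric] NF_cls nf_replicate del: act.simps)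

lemma Cj_trivial:
  assumes u: "u \<in> carrier G" and L2: "2 \<le> L" and c: "Cj u = \<one>\<^bsub>Aut\<^esub>"
  shows "u = \<one>\<^bsub>G\<^esub>"
proof -
  have comm: "u \<otimes>\<^bsub>G\<^esub> gen a [^]\<^bsub>G\<^esub> (1::nat) = gen a [^]\<^bsub>G\<^esub> (1::nat) \<otimes>\<^bsub>G\<^esub> u" if a: "a < L" for a
  proof -
    have g: "gen a \<in> carrier G" using a gen_carrier by auto
    have "Cj u (gen a) = gen a" using c g by (simp add: Aut_one_apply)
    then have "u \<otimes>\<^bsub>G\<^esub> gen a \<otimes>\<^bsub>G\<^esub> inv\<^bsub>G\<^esub> u \<otimes>\<^bsub>G\<^esub> u = gen a \<otimes>\<^bsub>G\<^esub> u" using g by (simp add: Cj_apply)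
    then show ?thesis using g u by (simp add: Gg.m_assoc)
  qed
  have "NF u = []"
  proof (rule ccontr)
    assume ne: "NF u \<noteq> []"
    have m: "\<And>a. a < L \<Longrightarrow> 1 mod ms ! a \<noteq> 0" using ms_ge by fastforce
    have h: "\<And>a. a < L \<Longrightarrow> fst (hd (NF u)) = a" by (rule key[OF u _ m m comm ne])
    have "fst (hd (NF u)) = 0" using h[of 0] L2 by fastforce
    moreover have "fst (hd (NF u)) = 1" using h[of 1] L2 by fastforce
    ultimately show False by simp
  qed
  then show ?thesis using NF_inv[OF u] by (simp add: one_G)
qed

lemma CjT_nontrivial:
  assumes u: "u \<in> carrier G" and L2: "2 \<le> L" and m3: "\<And>l. l < L \<Longrightarrow> 3 \<le> ms ! l"
    and c: "Cj u \<otimes>\<^bsub>Aut\<^esub> T = \<one>\<^bsub>Aut\<^esub>"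
  shows False
proof -
  have twist: "u \<otimes>\<^bsub>G\<^esub> gen a [^]\<^bsub>G\<^esub> (ms ! a - 1) = gen a [^]\<^bsub>G\<^esub> (1::nat) \<otimes>\<^bsub>G\<^esub> u" if a: "a < L" for a
  proof -
    have g: "gen a \<in> carrier G" using a gen_carrier by auto
    have i: "inv\<^bsub>G\<^esub> gen a = gen a [^]\<^bsub>G\<^esub> (ms ! a - 1)"
    proof -
      have "gen a [^]\<^bsub>G\<^esub> (ms ! a - 1) \<otimes>\<^bsub>G\<^esub> gen a = gen a [^]\<^bsub>G\<^esub> (Suc (ms ! a - 1))" by simp
      also have "Suc (ms ! a - 1) = ms ! a" using m3[OF a] by simp
      finally have "gen a [^]\<^bsub>G\<^esub> (ms ! a - 1) \<otimes>\<^bsub>G\<^esub> gen a = \<one>\<^bsub>G\<^esub>" using gen_pow_ms[OF a] by simp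
      then show ?thesis using g by (simp add: Gg.inv_equality)
    qed
    have "(Cj u \<otimes>\<^bsub>Aut\<^esub> T) (gen a) = gen a" using c g by (simp add: Aut_one_apply)
    then have "u \<otimes>\<^bsub>G\<^esub> inv\<^bsub>G\<^esub> gen a \<otimes>\<^bsub>G\<^esub> inv\<^bsub>G\<^esub> u = gen a" using g
      by (simp add: Aut_apply Cj_auto[OF u] T_auto T_apply iota(2)[OF a] Cj_apply)
    then have "u \<otimes>\<^bsub>G\<^esub> inv\<^bsub>G\<^esub> gen a \<otimes>\<^bsub>G\<^esub> inv\<^bsub>G\<^esub> u \<otimes>\<^bsub>G\<^esub> u = gen a \<otimes>\<^bsub>G\<^esub> u" by simp
    then show ?thesis using g u i by (simp add: Gg.m_assoc)
  qed
  show False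
  proof (cases "NF u = []")
    case False
    have m1: "\<And>a. a < L \<Longrightarrow> 1 mod ms ! a \<noteq> 0" using ms_ge by fastforce
    have m2: "\<And>a. a < L \<Longrightarrow> (ms ! a - 1) mod ms ! a \<noteq> 0" using m3 by fastforce
    have h: "\<And>a. a < L \<Longrightarrow> fst (hd (NF u)) = a" by (rule key[OF u _ m1 m2 twist False])
    have "fst (hd (NF u)) = 0" using h[of 0] L2 by fastforce
    moreover have "fst (hd (NF u)) = 1" using h[of 1] L2 by fastforce
    ultimately show False by simp
  next
    case True
    then have u1: "u = \<one>\<^bsub>G\<^esub>" using NF_inv[OF u] by (simp add: one_G)
    have a0: "0 < L" using L2 by linarith
    have "gen 0 [^]\<^bsub>G\<^esub> (ms ! 0 - 1) = gen 0 [^]\<^bsub>G\<^esub> (1::nat)" using twist[OF a0] u1 gen_carrier a0 by simp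
    then have "act 0 (ms ! 0 - 1) [] = act 0 1 []" using NF_gen_pow[OF a0] by metis
    then show False using m3[OF a0] by simp
  qed
qed

end

locale gctx =
  fixes n :: nat and m :: "nat \<Rightarrow> nat \<Rightarrow> enat"
  assumes cm: "coxeter_matrix n m" and conn: "cox_connected n m" and n0: "0 < n"
begin

abbreviation "adj \<equiv> cox_adj n m"
definition "A = {(a, b). adj a b}"

lemma adj_sym: "adj a b \<Longrightarrow> adj b a"
  using cm by (auto simp: cox_adj_def coxeter_matrix_def)

lemma adj_lt: "adj a b \<Longrightarrow> a < n \<and> b < n \<and> a \<noteq> b"
  by (auto simp: cox_adj_def)

lemma reach: "v < n \<Longrightarrow> \<exists>k. (0, v) \<in> A ^^ k"
  using conn n0 by (auto simp: cox_connected_def A_def rtrancl_power)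

definition dep :: "nat \<Rightarrow> nat" where
  "dep v = (LEAST k. (0, v) \<in> A ^^ k)"

lemma dep_path: "v < n \<Longrightarrow> (0, v) \<in> A ^^ dep v"
  unfolding dep_def using reach by (rule LeastI_ex)

lemma dep_le: "(0, v) \<in> A ^^ k \<Longrightarrow> dep v \<le> k"
  unfolding dep_def by (rule Least_le)

lemma dep_0: "dep 0 = 0"
  using dep_le[of 0 0] by simp

lemma dep_adj: "adj u v \<Longrightarrow> dep v \<le> Suc (dep u)"
proof -
  assume a: "adj u v"
  then have "(0, u) \<in> A ^^ dep u" using dep_path adj_lt by blast
  then have "(0, v) \<in> A ^^ Suc (dep u)" using a by (auto simp: A_def intro: relpow_Suc_I)
  then show ?thesis by (rule dep_le)
qed

lemma dep_pos: "v < n \<Longrightarrow> v \<noteq> 0 \<Longrightarrow> 0 < dep v"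
  using dep_path[of v] by (cases "dep v") auto

lemma par_ex: "v < n \<Longrightarrow> v \<noteq> 0 \<Longrightarrow> \<exists>u. adj u v \<and> Suc (dep u) = dep v"
proof -
  assume v: "v < n" "v \<noteq> 0"
  obtain k where k: "dep v = Suc k" using dep_pos[OF v] by (cases "dep v") auto
  then have "(0, v) \<in> A ^^ Suc k" using dep_path[OF v(1)] by simp
  then obtain u where u: "(0, u) \<in> A ^^ k" "(u, v) \<in> A" by (rule relpow_Suc_E)
  have a: "adj u v" using u(2) by (simp add: A_def)
  have "dep u \<le> k" using u(1) by (rule dep_le)
  moreover have "dep v \<le> Suc (dep u)" using a by (rule dep_adj)
  ultimately show ?thesis using a k by (intro exI[of _ u]) simp
qed

definition par :: "nat \<Rightarrow> nat" where
  "par v = (SOME u. adj u v \<and> Suc (dep u) = dep v)"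

lemma par: "v < n \<Longrightarrow> v \<noteq> 0 \<Longrightarrow> adj (par v) v \<and> Suc (dep (par v)) = dep v"
  unfolding par_def using par_ex by (rule someI_ex)

lemma dep_eq0: "v < n \<Longrightarrow> dep v = 0 \<longleftrightarrow> v = 0"
  by (cases "v = 0") (auto simp: dep_0 dest: dep_pos)

definition anc :: "nat \<Rightarrow> nat \<Rightarrow> nat" where
  "anc v k = (par ^^ k) v"

lemma anc_Suc: "anc v (Suc k) = par (anc v k)"
  by (simp add: anc_def)

lemma anc_props: "v < n \<Longrightarrow> k \<le> dep v \<Longrightarrow> anc v k < n \<and> dep (anc v k) = dep v - k"
proof (induction k)
  case 0 then show ?case by (simp add: anc_def)
next
  case (Suc k)
  then have h: "anc v k < n" "dep (anc v k) = dep v - k" by auto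
  have "anc v k \<noteq> 0"
  proof
    assume "anc v k = 0" then show False using h Suc.prems dep_0 by simp
  qed
  then have "adj (par (anc v k)) (anc v k) \<and> Suc (dep (par (anc v k))) = dep (anc v k)"
    using par h by auto
  then show ?case using h adj_lt by (auto simp: anc_Suc)
qed

lemma anc_adj: "v < n \<Longrightarrow> k < dep v \<Longrightarrow> adj (anc v (Suc k)) (anc v k)"
proof -
  assume v: "v < n" and k: "k < dep v"
  have h: "anc v k < n" "dep (anc v k) = dep v - k" using anc_props v k by auto
  have "anc v k \<noteq> 0"
  proof
    assume "anc v k = 0" then show False using h k dep_0 by simp
  qed
  then show ?thesis using par h by (auto simp: anc_Suc)
qed

lemma anc_inj: "v < n \<Longrightarrow> a \<le> dep v \<Longrightarrow> b \<le> dep v \<Longrightarrow> anc v a = anc v b \<Longrightarrow> a = b"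
  using anc_props[of v a] anc_props[of v b] by auto

lemma anc_top: "v < n \<Longrightarrow> anc v (dep v) = 0"
  using anc_props[of v "dep v"] dep_eq0 by auto

lemma succ_map: "(\<And>t. t < k \<Longrightarrow> P (f t) (f (Suc t))) \<Longrightarrow> successively P (map f [0..<Suc k])"
proof (induction k)
  case 0 then show ?case by simp
next
  case (Suc k)
  have "map f [0..<Suc (Suc k)] = map f [0..<Suc k] @ [f (Suc k)]" by simp
  then show ?case using Suc by (simp add: successively_append_iff)
qed

lemma tree_edge:
  assumes acyc: "\<not> cox_has_cycle n m" and a: "adj i j"
  shows "(j \<noteq> 0 \<and> i = par j) \<or> (i \<noteq> 0 \<and> j = par i)"
proof (rule ccontr)
  assume neg: "\<not> ?thesis"
  have i: "i < n" and j: "j < n" and ij: "i \<noteq> j" using a adj_lt by auto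
  have dj: "dep j \<le> Suc (dep i)" using a by (rule dep_adj)
  have di: "dep i \<le> Suc (dep j)" using adj_sym[OF a] by (rule dep_adj)
  define P where "P k1 = (\<exists>k2 \<le> dep j. anc i k1 = anc j k2)" for k1
  have Pd: "P (dep i)" unfolding P_def using anc_top[OF i] anc_top[OF j] by auto
  define k1 where "k1 = (LEAST k. P k)"
  have Pk1: "P k1" unfolding k1_def using Pd by (rule LeastI)
  have k1min: "\<And>k. P k \<Longrightarrow> k1 \<le> k" unfolding k1_def by (rule Least_le)
  have k1d: "k1 \<le> dep i" using k1min[OF Pd] .
  obtain k2 where k2: "k2 \<le> dep j" "anc i k1 = anc j k2" using Pk1 unfolding P_def by blast
  have depc: "dep i - k1 = dep j - k2" using anc_props[OF i k1d] anc_props[OF j k2(1)] k2(2) by auto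
  have k1p: "k1 \<noteq> 0"
  proof
    assume "k1 = 0"
    then have ia: "i = anc j k2" using k2 by (simp add: anc_def)
    have "k2 \<noteq> 0" using ia ij by (cases k2) (auto simp: anc_def)
    then have "k2 = 1" using depc \<open>k1 = 0\<close> dj k2(1) by auto
    then have "i = par j" using ia by (simp add: anc_def)
    moreover have "j \<noteq> 0" using \<open>k2 = 1\<close> k2(1) dep_eq0[OF j] by auto
    ultimately show False using neg by auto
  qed
  have k2p: "k2 \<noteq> 0"
  proof
    assume "k2 = 0"
    then have ja: "j = anc i k1" using k2 by (simp add: anc_def)
    then have "k1 = 1" using depc \<open>k2 = 0\<close> di k1d k1p by auto
    then have "j = par i" using ja by (simp add: anc_def)
    moreover have "i \<noteq> 0" using \<open>k1 = 1\<close> k1d dep_eq0[OF i] by auto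
    ultimately show False using neg by auto
  qed
  define xs where "xs = map (anc i) [0..<Suc k1]"
  define ys where "ys = map (anc j) [0..<k2]"
  define vs where "vs = xs @ rev ys"
  have dxs: "distinct xs" unfolding xs_def distinct_map
  proof
    show "inj_on (anc i) (set [0..<Suc k1])"
      by (rule inj_onI) (use anc_inj[OF i] k1d in auto)
  qed simp
  have dys: "distinct ys" unfolding ys_def distinct_map
  proof
    show "inj_on (anc j) (set [0..<k2])"
      by (rule inj_onI) (use anc_inj[OF j] k2(1) in auto)
  qed simp
  have disj: "set xs \<inter> set ys = {}"
  proof (rule ccontr)
    assume "set xs \<inter> set ys \<noteq> {}"
    then have "\<exists>a b. a \<le> k1 \<and> b < k2 \<and> anc i a = anc j b" unfolding xs_def ys_def
      by (auto simp: less_Suc_eq_le) (use le_refl in blast)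
    then obtain a b where ab: "a \<le> k1" "b < k2" "anc i a = anc j b" by blast
    then have "P a" unfolding P_def using k2(1) by (intro exI[of _ b]) auto
    then have "a = k1" using k1min ab(1) by fastforce
    then have "anc j b = anc j k2" using ab k2 by simp
    then have "b = k2" using anc_inj[OF j] ab(2) k2(1) by auto
    then show False using ab(2) by simp
  qed
  have dvs: "distinct vs" unfolding vs_def using dxs dys disj by auto
  have lvs: "3 \<le> length vs" unfolding vs_def xs_def ys_def using k1p k2p by simp
  obtain k2' where k2': "k2 = Suc k2'" using k2p by (cases k2) auto
  have s1: "successively adj xs" unfolding xs_def
    by (rule succ_map) (use anc_adj[OF i] k1d adj_sym in auto)
  have s2: "successively adj (rev ys)" unfolding ys_def k2' successively_rev
    by (rule succ_map) (use anc_adj[OF j] k2(1) k2' in auto)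
  have lx: "last xs = anc i k1" unfolding xs_def by simp
  have hy: "hd (rev ys) = anc j k2'" unfolding ys_def k2' by simp
  have junction: "adj (last xs) (hd (rev ys))" unfolding lx hy k2(2)
    using anc_adj[OF j, of k2'] k2(1) k2' by simp
  have svs: "successively adj vs" unfolding vs_def
    using s1 s2 junction by (simp add: successively_append_iff)
  have "last vs = j" unfolding vs_def ys_def k2' upt_conv_Cons[OF zero_less_Suc] by (simp add: anc_def last_rev)
  moreover have "hd vs = i" unfolding vs_def xs_def upt_conv_Cons[OF zero_less_Suc] by (simp add: anc_def)
  ultimately have "adj (last vs) (hd vs)" using adj_sym[OF a] by simp
  then have "cox_has_cycle n m"
    unfolding cox_has_cycle_def using dvs lvs svs by (auto simp: successively_conv_nth)
  then show False using acyc by simp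
qed

end

lemma mset_image_list: "mset xs = image_mset f M \<Longrightarrow> \<exists>ys. mset ys = M \<and> xs = map f ys"
proof (induction xs arbitrary: M)
  case Nil then show ?case by simp
next
  case (Cons x xs)
  have "x \<in># image_mset f M" using Cons.prems by (metis list.set_intros(1) set_mset_mset)
  then obtain y where y: "y \<in># M" "x = f y" by auto
  have "add_mset x (mset xs) = image_mset f M" using Cons.prems by simp
  then have "mset xs = image_mset f M - {#x#}" by (metis add_mset_remove_trivial)
  then have "mset xs = image_mset f (M - {#y#})" using y by (simp add: image_mset_Diff)
  then obtain ys where "mset ys = M - {#y#}" "xs = map f ys" using Cons.IH by blast
  then show ?case using y by (intro exI[of _ "y # ys"]) auto
qed

locale ctree = fpc +
  fixes n :: nat and m :: "nat \<Rightarrow> nat \<Rightarrow> enat"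
    and par :: "nat \<Rightarrow> nat" and pl :: "nat \<Rightarrow> nat" and chi :: "nat \<Rightarrow> nat" and d :: "nat \<Rightarrow> nat"
  assumes n0: "0 < n" and cm: "coxeter_matrix n m"
  and par_ax: "\<And>v. v < n \<Longrightarrow> v \<noteq> 0 \<Longrightarrow> par v < n \<and> Suc (d (par v)) = d v \<and> pl v < length ms \<and> chi (pl v) = v \<and> m (par v) v = enat (ms ! pl v)"
  and d0: "d 0 = 0"
  and chi_ax: "\<And>l. l < length ms \<Longrightarrow> chi l < n \<and> chi l \<noteq> 0 \<and> pl (chi l) = l"
  and edge_ax: "\<And>i j k. i < n \<Longrightarrow> j < n \<Longrightarrow> i \<noteq> j \<Longrightarrow> m i j = enat k \<Longrightarrow> (j \<noteq> 0 \<and> i = par j) \<or> (i \<noteq> 0 \<and> j = par i)"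
  and odd_ax: "\<And>l. l < length ms \<Longrightarrow> odd (ms ! l) \<and> 3 \<le> ms ! l"
  and L2: "2 \<le> length ms"

lemma minmax_set: "(min a b, max a b) = (min c d, max c d) \<Longrightarrow> {a, b} = {c, d::nat}"
  by (cases "a \<le> b"; cases "c \<le> d") (auto simp: min_def max_def)

lemma ctree_exists:
  assumes cm: "coxeter_matrix n m" and odd: "odd_coxeter n m" and tree: "cox_tree n m"
    and n3: "n \<ge> 3" and ms: "mset ms = finite_exponents n m"
  shows "\<exists>par pl chi d. ctree ms n m par pl chi d"
proof -
  have conn: "cox_connected n m" using tree by (simp add: cox_tree_def)
  have acyc: "\<not> cox_has_cycle n m" using tree by (simp add: cox_tree_def)
  interpret g: gctx n m using cm conn n3 by unfold_locales auto
  define E where "E = {(i, j). i < j \<and> j < n \<and> m i j \<noteq> \<infinity>}"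
  define f where "f = (\<lambda>(i, j). the_enat (m i j))"
  have finE: "finite E" unfolding E_def by (rule finite_subset[of _ "{..<n} \<times> {..<n}"]) auto
  obtain es where es: "mset es = mset_set E" "ms = map f es"
    using mset_image_list[of ms f "mset_set E"] ms unfolding finite_exponents_def E_def f_def by auto
  have set_es: "set es = E" using es(1) finE by (metis finite_set_mset_mset_set set_mset_mset)
  have dist: "distinct es"
    unfolding distinct_count_atmost_1 using es(1) finE set_es by (simp add: count_mset_set)
  have Lq: "length ms = length es" using es(2) by simp
  have symm: "\<And>i j. i < n \<Longrightarrow> j < n \<Longrightarrow> m i j = m j i" using cm by (auto simp: coxeter_matrix_def)
  define ekey where "ekey v = (min (g.par v) v, max (g.par v) v)" for v
  have ek: "ekey v \<in> E" if "v < n" "v \<noteq> 0" for v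
  proof -
    have "g.adj (g.par v) v" using g.par that by blast
    then have a: "g.par v < n" "g.par v \<noteq> v" "m (g.par v) v \<noteq> \<infinity>" "m v (g.par v) \<noteq> \<infinity>"
      using symm[OF _ that(1), of "g.par v"] by (auto simp: cox_adj_def)
    show ?thesis
    proof (cases "g.par v < v")
      case True
      then have "ekey v = (g.par v, v)" by (simp add: ekey_def)
      then show ?thesis using a True that(1) by (simp add: E_def)
    next
      case False
      then have "ekey v = (v, g.par v)" by (simp add: ekey_def)
      then show ?thesis using a False by (simp add: E_def)
    qed
  qed
  have ekey_inj: "v = w" if "v < n" "v \<noteq> 0" "w < n" "w \<noteq> 0" "ekey v = ekey w" for v w
  proof (rule ccontr)
    assume vw: "v \<noteq> w"
    have eq: "{g.par v, v} = {g.par w, w}" using that(5) unfolding ekey_def by (rule minmax_set)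
    have "v \<in> {g.par w, w}" unfolding eq[symmetric] by simp
    then have 1: "v = g.par w" using vw by simp
    have "w \<in> {g.par v, v}" unfolding eq by simp
    then have 2: "w = g.par v" using vw by simp
    have 3: "Suc (g.dep (g.par v)) = g.dep v" using g.par[OF that(1,2)] by blast
    have 4: "Suc (g.dep (g.par w)) = g.dep w" using g.par[OF that(3,4)] by blast
    have "Suc (g.dep w) = g.dep v" using 3 unfolding 2[symmetric] .
    moreover have "Suc (g.dep v) = g.dep w" using 4 unfolding 1[symmetric] .
    ultimately show False by linarith
  qed
  define pl where "pl v = (SOME l. l < length es \<and> es ! l = ekey v)" for v
  have pl: "pl v < length es \<and> es ! pl v = ekey v" if "v < n" "v \<noteq> 0" for v
  proof -
    have "\<exists>l. l < length es \<and> es ! l = ekey v" using ek[OF that] set_es by (auto simp: in_set_conv_nth)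
    then show ?thesis unfolding pl_def by (rule someI_ex)
  qed
  define chi where "chi l = (SOME v. v < n \<and> v \<noteq> 0 \<and> pl v = l)" for l
  have chi: "chi l < n \<and> chi l \<noteq> 0 \<and> pl (chi l) = l" if l: "l < length es" for l
  proof -
    obtain i j where ij: "es ! l = (i, j)" by (cases "es ! l")
    have "(i, j) \<in> E" using ij l set_es nth_mem by metis
    then have ijE: "i < j" "j < n" "m i j \<noteq> \<infinity>" by (auto simp: E_def)
    have adj: "g.adj i j" using ijE by (auto simp: cox_adj_def)
    have "\<exists>c. c < n \<and> c \<noteq> 0 \<and> ekey c = (i, j)"
    proof (cases "j \<noteq> 0 \<and> i = g.par j")
      case True
      then show ?thesis using ijE unfolding ekey_def by (intro exI[of _ j]) simp
    next
      case False
      then have "i \<noteq> 0 \<and> j = g.par i" using g.tree_edge[OF acyc adj] by blast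
      then show ?thesis using ijE unfolding ekey_def by (intro exI[of _ i]) simp
    qed
    then obtain c where c: "c < n" "c \<noteq> 0" "ekey c = (i, j)" by blast
    have "es ! pl c = es ! l" using pl[OF c(1,2)] c ij by simp
    then have "pl c = l" using nth_eq_iff_index_eq[OF dist, of "pl c" l] pl[OF c(1,2)] l by simp
    then have "\<exists>v. v < n \<and> v \<noteq> 0 \<and> pl v = l" using c by blast
    then show ?thesis unfolding chi_def by (rule someI_ex)
  qed
  have plinj: "v = w" if "v < n" "v \<noteq> 0" "w < n" "w \<noteq> 0" "pl v = pl w" for v w
    using ekey_inj[OF that(1-4)] pl[OF that(1,2)] pl[OF that(3,4)] that(5) by simp
  have ms_pl: "m (g.par v) v = enat (ms ! pl v)" if "v < n" "v \<noteq> 0" for v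
  proof -
    have a: "g.adj (g.par v) v" using g.par that by blast
    have ne: "m (g.par v) v \<noteq> \<infinity>" using a by (simp add: cox_adj_def)
    have "ms ! pl v = f (ekey v)" using es(2) pl[OF that] by simp
    also have "\<dots> = the_enat (m (g.par v) v)"
      unfolding f_def ekey_def using symm a by (auto simp: min_def max_def cox_adj_def)
    finally show ?thesis using ne by auto
  qed
  have "ctree ms n m g.par pl chi g.dep"
  proof
    fix l assume l: "l < length ms"
    obtain i j where ij: "es ! l = (i, j)" by (cases "es ! l")
    have "(i, j) \<in> E" using ij l Lq set_es nth_mem by metis
    then have ijE: "i < j" "j < n" "m i j \<noteq> \<infinity>" by (auto simp: E_def)
    then obtain k where k: "m i j = enat k" by auto
    have "ms ! l = k" using es(2) l ij k by (simp add: f_def)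
    moreover have "odd k"
    proof -
      have "m i j = \<infinity> \<or> (\<exists>k. m i j = enat k \<and> odd k)" using odd ijE unfolding odd_coxeter_def by auto
      then show ?thesis using k by auto
    qed
    moreover have "2 \<le> k"
    proof -
      have "2 \<le> m i j" using cm ijE unfolding coxeter_matrix_def by auto
      then show ?thesis using k by (simp add: numeral_eq_enat)
    qed
    ultimately show "odd (ms ! l) \<and> 3 \<le> ms ! l" by presburger
    then show "2 \<le> ms ! l" by simp
  next
    show "0 < n" using n3 by simp
    show "coxeter_matrix n m" by fact
    show "g.dep 0 = 0" by (rule g.dep_0)
  next
    fix v assume v: "v < n" "v \<noteq> 0"
    show "g.par v < n \<and> Suc (g.dep (g.par v)) = g.dep v \<and> pl v < length ms \<and> chi (pl v) = v \<and> m (g.par v) v = enat (ms ! pl v)"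
      using g.par[OF v] g.adj_lt pl[OF v] Lq chi[of "pl v"] plinj[OF v, of "chi (pl v)"] ms_pl[OF v] by auto
  next
    fix l assume "l < length ms"
    then show "chi l < n \<and> chi l \<noteq> 0 \<and> pl (chi l) = l" using chi Lq by auto
  next
    fix i j k assume "i < n" "j < n" "i \<noteq> j" "m i j = enat k"
    then have "g.adj i j" by (auto simp: cox_adj_def)
    then show "(j \<noteq> 0 \<and> i = g.par j) \<or> (i \<noteq> 0 \<and> j = g.par i)" by (rule g.tree_edge[OF acyc])
  next
    have "pl 1 \<noteq> pl 2" using plinj[of 1 2] n3 by auto
    moreover have "pl 1 < length ms" "pl 2 < length ms" using pl[of 1] pl[of 2] n3 Lq by auto
    ultimately show "2 \<le> length ms" by linarith
  qed
  then show ?thesis by blast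
qed

context group
begin

lemma cancel_simps[simp]:
  "a \<in> carrier G \<Longrightarrow> z \<in> carrier G \<Longrightarrow> inv a \<otimes> (a \<otimes> z) = z"
  "a \<in> carrier G \<Longrightarrow> z \<in> carrier G \<Longrightarrow> a \<otimes> (inv a \<otimes> z) = z"
  by (simp_all add: m_assoc[symmetric])

lemma invol_inv: "s \<in> carrier G \<Longrightarrow> s \<otimes> s = \<one> \<Longrightarrow> inv s = s"
  by (rule inv_equality) auto

lemma invol_cancel: "s \<in> carrier G \<Longrightarrow> s \<otimes> s = \<one> \<Longrightarrow> z \<in> carrier G \<Longrightarrow> s \<otimes> (s \<otimes> z) = z"
  by (simp add: m_assoc[symmetric])

lemma conj_pow: "x \<in> carrier G \<Longrightarrow> s \<in> carrier G \<Longrightarrow> (x \<otimes> s \<otimes> inv x) [^] (k::nat) = x \<otimes> s [^] k \<otimes> inv x"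
proof (induction k)
  case 0 then show ?case by simp
next
  case (Suc k)
  then show ?case by (simp add: m_assoc)
qed

lemma L1:
  assumes c: "r \<in> carrier G" "s0 \<in> carrier G" "sv \<in> carrier G" and i: "s0 \<otimes> s0 = \<one>" "sv \<otimes> sv = \<one>"
  shows "s0 \<otimes> (inv r \<otimes> (r \<otimes> s0 \<otimes> inv r) \<otimes> sv \<otimes> r) \<otimes> s0 = inv (inv r \<otimes> (r \<otimes> s0 \<otimes> inv r) \<otimes> sv \<otimes> r)"
  using c invol_inv[OF c(2) i(1)] invol_inv[OF c(3) i(2)] invol_cancel[OF c(2) i(1)]
  by (simp add: m_assoc inv_mult_group)

lemma L3:
  assumes c: "r \<in> carrier G" "s0 \<in> carrier G" "sv \<in> carrier G" and i: "s0 \<otimes> s0 = \<one>" "sv \<otimes> sv = \<one>"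
  shows "r \<otimes> (inv (inv r \<otimes> (r \<otimes> s0 \<otimes> inv r) \<otimes> sv \<otimes> r) \<otimes> s0) \<otimes> inv r = sv"
  using c invol_inv[OF c(2) i(1)] invol_inv[OF c(3) i(2)] invol_cancel[OF c(2) i(1)]
  by (simp add: m_assoc inv_mult_group)

lemma L2:
  assumes c: "z \<in> carrier G" "s0 \<in> carrier G" and i: "s0 \<otimes> s0 = \<one>"
    and cz: "s0 \<otimes> z \<otimes> s0 = inv z" and zp: "z [^] Suc (2 * e) = \<one>"
  shows "z [^] (e::nat) \<otimes> s0 \<otimes> inv (z [^] e) = inv z \<otimes> s0"
proof -
  have is0: "inv s0 = s0" using invol_inv[OF c(2) i] .
  have "s0 \<otimes> z [^] e \<otimes> s0 = (s0 \<otimes> z \<otimes> s0) [^] e"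
    using conj_pow[OF c(2) c(1), of e] is0 by simp
  also have "\<dots> = inv (z [^] e)" using cz c by (simp add: nat_pow_inv)
  finally have h: "s0 \<otimes> z [^] e \<otimes> s0 = inv (z [^] e)" .
  have h2: "s0 \<otimes> inv (z [^] e) = z [^] e \<otimes> s0"
  proof -
    have "s0 \<otimes> inv (z [^] e) = s0 \<otimes> (s0 \<otimes> z [^] e \<otimes> s0)" using h by simp
    also have "\<dots> = z [^] e \<otimes> s0" using c invol_cancel[OF c(2) i] by (simp add: m_assoc)
    finally show ?thesis .
  qed
  have "z [^] e \<otimes> s0 \<otimes> inv (z [^] e) = z [^] e \<otimes> (z [^] e \<otimes> s0)"
    using h2 c by (simp add: m_assoc)
  also have "\<dots> = z [^] (e + e) \<otimes> s0" using c by (simp add: m_assoc[symmetric] nat_pow_mult)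
  also have "z [^] (e + e) = inv z"
  proof -
    have "z [^] (e + e) \<otimes> z = \<one>" using zp c by (simp add: mult_2)
    then show ?thesis using c by (simp add: inv_equality)
  qed
  finally show ?thesis .
qed

lemma L4:
  assumes c: "x \<in> carrier G" "t \<in> carrier G" and i: "t \<otimes> t = \<one>"
  shows "(x \<otimes> t \<otimes> inv x) \<otimes> (x \<otimes> t \<otimes> inv x) = \<one>"
  using c invol_cancel[OF c(2) i] by (simp add: m_assoc)

lemma L5:
  assumes c: "x \<in> carrier G" "y \<in> carrier G" "t \<in> carrier G"
  shows "(x \<otimes> t \<otimes> inv x) \<otimes> ((x \<otimes> y) \<otimes> t \<otimes> inv (x \<otimes> y)) = x \<otimes> ((t \<otimes> y \<otimes> t) \<otimes> inv y) \<otimes> inv x"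
  using c by (simp add: m_assoc inv_mult_group)

end

context pres
begin

lemma cls_evalw: "w \<in> Wd \<Longrightarrow> cls w = evalw G gen w"
proof (induction w)
  case Nil then show ?case by (simp add: one_G)
next
  case (Cons c w)
  obtain i b where c: "c = (i, b)" by (cases c)
  then show ?case using Cons by (cases b) (auto simp: cls_Cons_True cls_Cons_False)
qed

lemma gen_funcset: "gen \<in> I \<rightarrow> carrier G"
  using gen_carrier by auto

end


context ctree
begin

interpretation Gg: group G by (rule group_G)
interpretation A: group Aut by (rule group_Aut)

sublocale C: pres "{..<n}" "coxeter_relators n m"
  by unfold_locales (auto simp: coxeter_relators_def pres_words_def split: if_splits)

interpretation Cg: group C.G by (rule C.group_G)

lemma L_pos: "0 < L" using L2 by linarith

primrec trec :: "(nat \<Rightarrow> 'x \<Rightarrow> 'x) \<Rightarrow> 'x \<Rightarrow> nat \<Rightarrow> nat \<Rightarrow> 'x" where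
  "trec g x0 0 v = x0"
| "trec g x0 (Suc k) v = g v (trec g x0 k (par v))"

definition tval :: "(nat \<Rightarrow> 'x \<Rightarrow> 'x) \<Rightarrow> 'x \<Rightarrow> nat \<Rightarrow> 'x" where
  "tval g x0 v = trec g x0 (d v) v"

lemma tval_0: "tval g x0 0 = x0"
  by (simp add: tval_def d0)

lemma tval_step: "v < n \<Longrightarrow> v \<noteq> 0 \<Longrightarrow> tval g x0 v = g v (tval g x0 (par v))"
proof -
  assume v: "v < n" "v \<noteq> 0"
  have "d v = Suc (d (par v))" using par_ax[OF v] by simp
  then show ?thesis by (simp add: tval_def)
qed

lemma tree_induct:
  assumes "P 0" and step: "\<And>v. v < n \<Longrightarrow> v \<noteq> 0 \<Longrightarrow> P (par v) \<Longrightarrow> P v" and v: "v < n"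
  shows "P v"
proof -
  have "\<forall>v. v < n \<longrightarrow> d v = k \<longrightarrow> P v" for k
  proof (induction k)
    case 0
    then show ?case using assms(1) par_ax by fastforce
  next
    case (Suc k)
    show ?case
    proof (intro allI impI)
      fix v assume v: "v < n" "d v = Suc k"
      show "P v"
      proof (cases "v = 0")
        case True then show ?thesis using assms(1) by simp
      next
        case False
        have "par v < n" "d (par v) = k" using par_ax[OF v(1) False] v(2) by auto
        then show ?thesis using step[OF v(1) False] Suc.IH by blast
      qed
    qed
  qed
  then show ?thesis using v by blast
qed

definition ee :: "nat \<Rightarrow> nat" where "ee l = (ms ! l - 1) div 2"

lemma ee: "l < L \<Longrightarrow> Suc (2 * ee l) = ms ! l"
  using odd_ax[of l] by (auto simp: ee_def elim!: oddE)

definition yy :: "nat \<Rightarrow> (nat \<times> bool) list set" where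
  "yy l = gen l [^]\<^bsub>G\<^esub> ee l"

definition aa :: "nat \<Rightarrow> (nat \<times> bool) list set" where
  "aa = tval (\<lambda>v x. x \<otimes>\<^bsub>G\<^esub> yy (pl v)) \<one>\<^bsub>G\<^esub>"

lemma aa_0: "aa 0 = \<one>\<^bsub>G\<^esub>" by (simp add: aa_def tval_0)

lemma aa_step: "v < n \<Longrightarrow> v \<noteq> 0 \<Longrightarrow> aa v = aa (par v) \<otimes>\<^bsub>G\<^esub> yy (pl v)"
  unfolding aa_def by (rule tval_step)

lemma gen_c: "l < L \<Longrightarrow> gen l \<in> carrier G" by (simp add: gen_carrier)

lemma yy_c: "l < L \<Longrightarrow> yy l \<in> carrier G" by (simp add: yy_def gen_c)

lemma aa_c: "v < n \<Longrightarrow> aa v \<in> carrier G"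
proof (rule tree_induct[of "\<lambda>v. aa v \<in> carrier G"])
  show "aa 0 \<in> carrier G" by (simp add: aa_0)
next
  fix v assume v: "v < n" "v \<noteq> 0" and IH: "aa (par v) \<in> carrier G"
  have "pl v < L" using par_ax[OF v] by simp
  then show "aa v \<in> carrier G" using IH by (simp add: aa_step[OF v] yy_c)
qed

lemma Cj_c: "g \<in> carrier G \<Longrightarrow> Cj g \<in> carrier Aut" by (simp add: Aut_carrier Cj_auto)
lemma T_c: "T \<in> carrier Aut" by (simp add: Aut_carrier T_auto)

definition Av :: "nat \<Rightarrow> ((nat \<times> bool) list set \<Rightarrow> (nat \<times> bool) list set)" where
  "Av v = Cj (aa v) \<otimes>\<^bsub>Aut\<^esub> T \<otimes>\<^bsub>Aut\<^esub> inv\<^bsub>Aut\<^esub> Cj (aa v)"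

lemma Av_c: "v < n \<Longrightarrow> Av v \<in> carrier Aut"
  by (simp add: Av_def Cj_c T_c aa_c)

lemma Av_sq: "v < n \<Longrightarrow> Av v \<otimes>\<^bsub>Aut\<^esub> Av v = \<one>\<^bsub>Aut\<^esub>"
  unfolding Av_def by (rule A.L4) (simp_all add: Cj_c T_c aa_c TT)

lemma iota_yy: "l < L \<Longrightarrow> iota (yy l) \<otimes>\<^bsub>G\<^esub> inv\<^bsub>G\<^esub> yy l = gen l"
proof -
  assume l: "l < L"
  have g: "gen l \<in> carrier G" using gen_c[OF l] .
  have "iota (yy l) = inv\<^bsub>G\<^esub> yy l"
    unfolding yy_def using group_hom.hom_nat_pow[of G G iota] iota l g
    by (simp add: group_hom_def group_hom_axioms_def Gg.is_group Gg.nat_pow_inv)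
  then have "iota (yy l) \<otimes>\<^bsub>G\<^esub> inv\<^bsub>G\<^esub> yy l = inv\<^bsub>G\<^esub> (gen l [^]\<^bsub>G\<^esub> (ee l + ee l))"
    using g by (simp add: yy_def Gg.inv_mult_group[symmetric] Gg.nat_pow_mult)
  also have "\<dots> = gen l"
  proof -
    have "gen l \<otimes>\<^bsub>G\<^esub> gen l [^]\<^bsub>G\<^esub> (ee l + ee l) = gen l [^]\<^bsub>G\<^esub> (ms ! l)"
      using ee[OF l] g by (simp add: Gg.nat_pow_Suc2[symmetric] mult_2)
    then have "gen l \<otimes>\<^bsub>G\<^esub> gen l [^]\<^bsub>G\<^esub> (ee l + ee l) = \<one>\<^bsub>G\<^esub>" using gen_pow_ms[OF l] by simp
    then show ?thesis using g by (simp add: Gg.inv_equality)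
  qed
  finally show ?thesis .
qed

lemma TCjT: "g \<in> carrier G \<Longrightarrow> T \<otimes>\<^bsub>Aut\<^esub> Cj g \<otimes>\<^bsub>Aut\<^esub> T = Cj (iota g)"
  using T_Cj TT by (simp add: A.m_assoc Cj_c T_c iota_carrier)

lemma Av_edge: "v < n \<Longrightarrow> v \<noteq> 0 \<Longrightarrow>
  Av (par v) \<otimes>\<^bsub>Aut\<^esub> Av v = Cj (aa (par v) \<otimes>\<^bsub>G\<^esub> gen (pl v) \<otimes>\<^bsub>G\<^esub> inv\<^bsub>G\<^esub> aa (par v))"
proof -
  assume v: "v < n" "v \<noteq> 0"
  define p where "p = par v"
  define l where "l = pl v"
  have p: "p < n" and l: "l < L" using par_ax[OF v] p_def l_def by auto
  have ap: "aa p \<in> carrier G" using aa_c[OF p] .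
  have y: "yy l \<in> carrier G" using yy_c[OF l] .
  have av: "aa v = aa p \<otimes>\<^bsub>G\<^esub> yy l" using aa_step[OF v] p_def l_def by simp
  have "Av p \<otimes>\<^bsub>Aut\<^esub> Av v = Cj (aa p) \<otimes>\<^bsub>Aut\<^esub> ((T \<otimes>\<^bsub>Aut\<^esub> Cj (yy l) \<otimes>\<^bsub>Aut\<^esub> T) \<otimes>\<^bsub>Aut\<^esub> inv\<^bsub>Aut\<^esub> Cj (yy l)) \<otimes>\<^bsub>Aut\<^esub> inv\<^bsub>Aut\<^esub> Cj (aa p)"
    unfolding Av_def av Cj_mult[OF ap y] by (rule A.L5) (simp_all add: Cj_c T_c ap y)
  also have "\<dots> = Cj (aa p) \<otimes>\<^bsub>Aut\<^esub> Cj (gen l) \<otimes>\<^bsub>Aut\<^esub> Cj (inv\<^bsub>G\<^esub> aa p)"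
    using y ap by (simp add: TCjT Cj_inv[symmetric] Cj_mult[symmetric] iota_carrier iota_yy[OF l])
  also have "\<dots> = Cj (aa p \<otimes>\<^bsub>G\<^esub> gen l \<otimes>\<^bsub>G\<^esub> inv\<^bsub>G\<^esub> aa p)"
    using ap gen_c[OF l] by (simp add: Cj_mult)
  finally show ?thesis unfolding p_def l_def .
qed

lemma Av_rel: "i < n \<Longrightarrow> j < n \<Longrightarrow> m i j = enat k \<Longrightarrow> (Av i \<otimes>\<^bsub>Aut\<^esub> Av j) [^]\<^bsub>Aut\<^esub> k = \<one>\<^bsub>Aut\<^esub>"
proof -
  assume i: "i < n" and j: "j < n" and k: "m i j = enat k"
  have fwd: "(Av (par v) \<otimes>\<^bsub>Aut\<^esub> Av v) [^]\<^bsub>Aut\<^esub> (ms ! pl v) = \<one>\<^bsub>Aut\<^esub>" if v: "v < n" "v \<noteq> 0" for v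
  proof -
    have p: "par v < n" and l: "pl v < L" using par_ax[OF v] by auto
    have ap: "aa (par v) \<in> carrier G" using aa_c[OF p] .
    have "(Av (par v) \<otimes>\<^bsub>Aut\<^esub> Av v) [^]\<^bsub>Aut\<^esub> (ms ! pl v)
        = Cj ((aa (par v) \<otimes>\<^bsub>G\<^esub> gen (pl v) \<otimes>\<^bsub>G\<^esub> inv\<^bsub>G\<^esub> aa (par v)) [^]\<^bsub>G\<^esub> (ms ! pl v))"
      using Av_edge[OF v] ap gen_c[OF l] by (simp add: Cj_pow)
    also have "\<dots> = Cj \<one>\<^bsub>G\<^esub>"
      using ap gen_c[OF l] by (simp add: Gg.conj_pow gen_pow_ms[OF l])
    finally show ?thesis by (simp add: Cj_one)
  qed
  show ?thesis
  proof (cases "i = j")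
    case True
    then have "k = 1" using k cm i by (auto simp: coxeter_matrix_def one_enat_def)
    then show ?thesis using True Av_sq[OF i] Av_c[OF i] by simp
  next
    case False
    then have "(j \<noteq> 0 \<and> i = par j) \<or> (i \<noteq> 0 \<and> j = par i)" using edge_ax[OF i j False k] by simp
    then show ?thesis
    proof
      assume h: "j \<noteq> 0 \<and> i = par j"
      then have "m (par j) j = enat k" using k by simp
      then have "k = ms ! pl j" using par_ax[OF j] h by simp
      then show ?thesis using fwd[OF j] h by simp
    next
      assume h: "i \<noteq> 0 \<and> j = par i"
      have mji: "m j i = enat k" using k cm i j by (simp add: coxeter_matrix_def)
      then have "m (par i) i = enat k" using h by simp
      then have kk: "k = ms ! pl i" using par_ax[OF i] h by simp
      have pi: "par i < n" using par_ax[OF i] h by simp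
      have "Av i \<otimes>\<^bsub>Aut\<^esub> Av (par i) = inv\<^bsub>Aut\<^esub> (Av (par i) \<otimes>\<^bsub>Aut\<^esub> Av i)"
        using Av_c[OF i] Av_c[OF pi] Av_sq[OF i] Av_sq[OF pi]
        by (simp add: A.inv_mult_group A.invol_inv)
      then have "(Av i \<otimes>\<^bsub>Aut\<^esub> Av (par i)) [^]\<^bsub>Aut\<^esub> k = inv\<^bsub>Aut\<^esub> ((Av (par i) \<otimes>\<^bsub>Aut\<^esub> Av i) [^]\<^bsub>Aut\<^esub> k)"
        using Av_c[OF i] Av_c[OF pi] by (simp add: A.nat_pow_inv)
      then show ?thesis using fwd[OF i] h kk by simp
    qed
  qed
qed


lemma Av_funcset: "Av \<in> {..<n} \<rightarrow> carrier Aut" using Av_c by auto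

lemma Phi_ex: "\<exists>h. h \<in> hom C.G Aut \<and> (\<forall>i\<in>{..<n}. h (C.gen i) = Av i)"
proof (rule C.universal[OF group_Aut Av_funcset])
  fix r assume "r \<in> coxeter_relators n m"
  then obtain i j k where r: "r = concat (replicate k [(i, True), (j, True)])" "i < n" "j < n" "m i j = enat k"
    unfolding coxeter_relators_def by blast
  have "evalw Aut Av r = (Av i \<otimes>\<^bsub>Aut\<^esub> Av j) [^]\<^bsub>Aut\<^esub> k"
    unfolding r(1) by (rule C.evalw_concat_replicate[OF group_Aut Av_funcset]) (use r in auto)
  also have "\<dots> = \<one>\<^bsub>Aut\<^esub>" using Av_rel r by simp
  finally show "evalw Aut Av r = \<one>\<^bsub>Aut\<^esub>" .
qed

definition Phi where "Phi = (SOME h. h \<in> hom C.G Aut \<and> (\<forall>i\<in>{..<n}. h (C.gen i) = Av i))"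

lemma Phi: "Phi \<in> hom C.G Aut" "\<And>i. i < n \<Longrightarrow> Phi (C.gen i) = Av i"
  using someI_ex[OF Phi_ex] unfolding Phi_def by auto

interpretation Phi: group_hom C.G Aut Phi
  by (simp add: group_hom_def group_hom_axioms_def C.group_G group_Aut Phi(1))

abbreviation "sg \<equiv> C.gen"

lemma sg_c: "i < n \<Longrightarrow> sg i \<in> carrier C.G" by (simp add: C.gen_carrier)

lemma C_rel: "i < n \<Longrightarrow> j < n \<Longrightarrow> m i j = enat k \<Longrightarrow> (sg i \<otimes>\<^bsub>C.G\<^esub> sg j) [^]\<^bsub>C.G\<^esub> k = \<one>\<^bsub>C.G\<^esub>"
proof -
  assume r: "i < n" "j < n" "m i j = enat k"
  define w where "w = concat (replicate k [(i, True), (j, True)])"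
  have wR: "w \<in> coxeter_relators n m" unfolding w_def coxeter_relators_def using r by blast
  have ww: "w \<in> C.Wd" using wR C.R_words by blast
  have "(sg i \<otimes>\<^bsub>C.G\<^esub> sg j) [^]\<^bsub>C.G\<^esub> k = evalw C.G sg w"
    unfolding w_def by (rule C.evalw_concat_replicate[OF C.group_G C.gen_funcset, symmetric]) (use r in auto)
  also have "\<dots> = C.cls w" using C.cls_evalw[OF ww] by simp
  also have "\<dots> = C.cls []" by (rule C.cls_eqI[OF C.rel_R[OF wR]])
  finally show ?thesis by (simp add: C.one_G)
qed

lemma sg_sq: "i < n \<Longrightarrow> sg i \<otimes>\<^bsub>C.G\<^esub> sg i = \<one>\<^bsub>C.G\<^esub>"
proof -
  assume i: "i < n"
  have "m i i = enat 1" using cm i by (simp add: coxeter_matrix_def one_enat_def)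
  then show ?thesis using C_rel[OF i i] sg_c[OF i] by fastforce
qed

definition rho :: "nat \<Rightarrow> (nat \<times> bool) list set" where
  "rho = tval (\<lambda>v x. x \<otimes>\<^bsub>C.G\<^esub> (inv\<^bsub>C.G\<^esub> x \<otimes>\<^bsub>C.G\<^esub> sg (par v) \<otimes>\<^bsub>C.G\<^esub> sg v \<otimes>\<^bsub>C.G\<^esub> x) [^]\<^bsub>C.G\<^esub> ee (pl v)) \<one>\<^bsub>C.G\<^esub>"

definition zz :: "nat \<Rightarrow> (nat \<times> bool) list set" where
  "zz l = inv\<^bsub>C.G\<^esub> rho (par (chi l)) \<otimes>\<^bsub>C.G\<^esub> sg (par (chi l)) \<otimes>\<^bsub>C.G\<^esub> sg (chi l) \<otimes>\<^bsub>C.G\<^esub> rho (par (chi l))"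

lemma rho_0: "rho 0 = \<one>\<^bsub>C.G\<^esub>" by (simp add: rho_def tval_0)

lemma rho_step: "v < n \<Longrightarrow> v \<noteq> 0 \<Longrightarrow> rho v = rho (par v) \<otimes>\<^bsub>C.G\<^esub> zz (pl v) [^]\<^bsub>C.G\<^esub> ee (pl v)"
proof -
  assume v: "v < n" "v \<noteq> 0"
  have "chi (pl v) = v" using par_ax[OF v] by simp
  then show ?thesis unfolding zz_def rho_def by (simp add: tval_step[OF v])
qed

lemma rho_c: "v < n \<Longrightarrow> rho v \<in> carrier C.G"
proof (rule tree_induct[of "\<lambda>v. rho v \<in> carrier C.G"])
  show "rho 0 \<in> carrier C.G" by (simp add: rho_0)
next
  fix v assume v: "v < n" "v \<noteq> 0" and IH: "rho (par v) \<in> carrier C.G"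
  have "par v < n" using par_ax[OF v] by simp
  moreover have "rho v = rho (par v) \<otimes>\<^bsub>C.G\<^esub> (inv\<^bsub>C.G\<^esub> rho (par v) \<otimes>\<^bsub>C.G\<^esub> sg (par v) \<otimes>\<^bsub>C.G\<^esub> sg v \<otimes>\<^bsub>C.G\<^esub> rho (par v)) [^]\<^bsub>C.G\<^esub> ee (pl v)"
    unfolding rho_def by (rule tval_step[OF v])
  ultimately show "rho v \<in> carrier C.G" using IH v by (simp add: sg_c)
qed

lemma chi_c: "l < L \<Longrightarrow> chi l < n \<and> chi l \<noteq> 0 \<and> par (chi l) < n"
  using chi_ax par_ax by blast

lemma zz_c: "l < L \<Longrightarrow> zz l \<in> carrier C.G"
  using chi_c[of l] by (simp add: zz_def rho_c sg_c)

lemma zz_pow: "l < L \<Longrightarrow> zz l [^]\<^bsub>C.G\<^esub> (ms ! l) = \<one>\<^bsub>C.G\<^esub>"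
proof -
  assume l: "l < L"
  define c where "c = chi l"
  have c: "c < n" "c \<noteq> 0" "par c < n" "pl c = l" using chi_c[OF l] chi_ax[OF l] c_def by auto
  have mm: "m (par c) c = enat (ms ! l)" using par_ax[OF c(1,2)] c(4) by simp
  have r: "rho (par c) \<in> carrier C.G" using rho_c[OF c(3)] .
  have "zz l = inv\<^bsub>C.G\<^esub> rho (par c) \<otimes>\<^bsub>C.G\<^esub> (sg (par c) \<otimes>\<^bsub>C.G\<^esub> sg c) \<otimes>\<^bsub>C.G\<^esub> inv\<^bsub>C.G\<^esub> (inv\<^bsub>C.G\<^esub> rho (par c))"
    unfolding zz_def c_def[symmetric] using r sg_c c by (simp add: Cg.m_assoc)
  moreover have "(inv\<^bsub>C.G\<^esub> rho (par c) \<otimes>\<^bsub>C.G\<^esub> (sg (par c) \<otimes>\<^bsub>C.G\<^esub> sg c) \<otimes>\<^bsub>C.G\<^esub> inv\<^bsub>C.G\<^esub> (inv\<^bsub>C.G\<^esub> rho (par c))) [^]\<^bsub>C.G\<^esub> (ms ! l) = inv\<^bsub>C.G\<^esub> rho (par c) \<otimes>\<^bsub>C.G\<^esub> (sg (par c) \<otimes>\<^bsub>C.G\<^esub> sg c) [^]\<^bsub>C.G\<^esub> (ms ! l) \<otimes>\<^bsub>C.G\<^esub> inv\<^bsub>C.G\<^esub> (inv\<^bsub>C.G\<^esub> rho (par c))"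
    by (rule Cg.conj_pow) (use r sg_c c in auto)
  ultimately have "zz l [^]\<^bsub>C.G\<^esub> (ms ! l) = inv\<^bsub>C.G\<^esub> rho (par c) \<otimes>\<^bsub>C.G\<^esub> (sg (par c) \<otimes>\<^bsub>C.G\<^esub> sg c) [^]\<^bsub>C.G\<^esub> (ms ! l) \<otimes>\<^bsub>C.G\<^esub> inv\<^bsub>C.G\<^esub> (inv\<^bsub>C.G\<^esub> rho (par c))"
    by simp
  then show ?thesis using C_rel[OF c(3) c(1) mm] r by simp
qed

lemma zz_funcset: "zz \<in> {..<L} \<rightarrow> carrier C.G" using zz_c by auto

lemma psi_ex: "\<exists>h. h \<in> hom G C.G \<and> (\<forall>l\<in>{..<L}. h (gen l) = zz l)"
proof (rule universal[OF C.group_G zz_funcset])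
  fix r assume "r \<in> fpc_R ms"
  then have "\<exists>l. l < L \<and> r = replicate (ms ! l) (l, True)" by (auto simp: fpc_R_def)
  then obtain l where l: "l < L" "r = replicate (ms ! l) (l, True)" by blast
  have "evalw C.G zz r = zz l [^]\<^bsub>C.G\<^esub> (ms ! l)"
    unfolding l(2) by (rule evalw_replicate[OF C.group_G zz_funcset]) (use l in simp)
  then show "evalw C.G zz r = \<one>\<^bsub>C.G\<^esub>" using zz_pow[OF l(1)] by simp
qed

definition psi where "psi = (SOME h. h \<in> hom G C.G \<and> (\<forall>l\<in>{..<L}. h (gen l) = zz l))"

lemma psi: "psi \<in> hom G C.G" "\<And>l. l < L \<Longrightarrow> psi (gen l) = zz l"
  using someI_ex[OF psi_ex] unfolding psi_def by auto

interpretation psi: group_hom G C.G psi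
  by (simp add: group_hom_def group_hom_axioms_def C.group_G group_G psi(1))

lemma Phi_rho: "v < n \<Longrightarrow> Phi (rho v) = Cj (aa v)"
proof (rule tree_induct[of "\<lambda>v. Phi (rho v) = Cj (aa v)"])
  show "Phi (rho 0) = Cj (aa 0)" by (simp add: rho_0 aa_0 Cj_one)
next
  fix v assume v: "v < n" "v \<noteq> 0" and IH: "Phi (rho (par v)) = Cj (aa (par v))"
  define p where "p = par v"
  define l where "l = pl v"
  have p: "p < n" and l: "l < L" and cl: "chi l = v" using par_ax[OF v] p_def l_def by auto
  have rp: "rho p \<in> carrier C.G" using rho_c[OF p] .
  have ap: "aa p \<in> carrier G" using aa_c[OF p] .
  have IH': "Phi (rho p) = Cj (aa p)" using IH p_def by simp
  have zl: "zz l = inv\<^bsub>C.G\<^esub> rho p \<otimes>\<^bsub>C.G\<^esub> sg p \<otimes>\<^bsub>C.G\<^esub> sg v \<otimes>\<^bsub>C.G\<^esub> rho p"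
    unfolding zz_def cl p_def ..
  have "Phi (zz l) = inv\<^bsub>Aut\<^esub> Cj (aa p) \<otimes>\<^bsub>Aut\<^esub> (Av p \<otimes>\<^bsub>Aut\<^esub> Av v) \<otimes>\<^bsub>Aut\<^esub> Cj (aa p)"
    unfolding zl using rp sg_c p v IH' Av_c Cj_c[OF ap]
    by (simp add: Phi(2) A.m_assoc Phi.hom_inv)
  also have "Av p \<otimes>\<^bsub>Aut\<^esub> Av v = Cj (aa p) \<otimes>\<^bsub>Aut\<^esub> Cj (gen l) \<otimes>\<^bsub>Aut\<^esub> inv\<^bsub>Aut\<^esub> Cj (aa p)"
    using Av_edge[OF v] ap gen_c[OF l] p_def l_def by (simp add: Cj_mult Cj_inv)
  finally have "Phi (zz l) = Cj (gen l)"
    using ap gen_c[OF l] by (simp add: Cj_c A.m_assoc)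
  then have "Phi (rho v) = Cj (aa p) \<otimes>\<^bsub>Aut\<^esub> Cj (gen l) [^]\<^bsub>Aut\<^esub> ee l"
    using rho_step[OF v] rp zz_c[OF l] IH' p_def l_def by (simp add: Phi.hom_nat_pow)
  also have "\<dots> = Cj (aa v)"
    using aa_step[OF v] ap gen_c[OF l] p_def l_def by (simp add: Cj_pow Cj_mult yy_def)
  finally show "Phi (rho v) = Cj (aa v)" .
qed

lemma Phi_zz: "l < L \<Longrightarrow> Phi (zz l) = Cj (gen l)"
proof -
  assume l: "l < L"
  define v where "v = chi l"
  have v: "v < n" "v \<noteq> 0" and plv: "pl v = l" using chi_ax[OF l] v_def by auto
  have p: "par v < n" using par_ax[OF v] by simp
  have rp: "rho (par v) \<in> carrier C.G" using rho_c[OF p] .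
  have ap: "aa (par v) \<in> carrier G" using aa_c[OF p] .
  have "Phi (zz l) = inv\<^bsub>Aut\<^esub> Cj (aa (par v)) \<otimes>\<^bsub>Aut\<^esub> (Av (par v) \<otimes>\<^bsub>Aut\<^esub> Av v) \<otimes>\<^bsub>Aut\<^esub> Cj (aa (par v))"
    unfolding zz_def v_def[symmetric] using rp sg_c p v Phi_rho[OF p] Av_c Cj_c[OF ap]
    by (simp add: Phi(2) A.m_assoc Phi.hom_inv)
  also have "Av (par v) \<otimes>\<^bsub>Aut\<^esub> Av v = Cj (aa (par v)) \<otimes>\<^bsub>Aut\<^esub> Cj (gen l) \<otimes>\<^bsub>Aut\<^esub> inv\<^bsub>Aut\<^esub> Cj (aa (par v))"
    using Av_edge[OF v] ap gen_c[OF l] plv by (simp add: Cj_mult Cj_inv)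
  finally show "Phi (zz l) = Cj (gen l)"
    using ap gen_c[OF l] by (simp add: Cj_c A.m_assoc)
qed

lemma Phi_psi: "u \<in> carrier G \<Longrightarrow> Phi (psi u) = Cj u"
proof -
  assume u: "u \<in> carrier G"
  have "(Phi \<circ> psi) u = Cj u"
  proof (rule hom_ext[OF group_Aut _ Cj_hom _ u])
    show "Phi \<circ> psi \<in> hom G Aut" by (rule hom_compose[OF psi(1) Phi(1)])
    fix l assume "l \<in> {..<L}"
    then show "(Phi \<circ> psi) (gen l) = Cj (gen l)" by (simp add: psi(2) Phi_zz)
  qed
  then show ?thesis by simp
qed


abbreviation "s0 \<equiv> sg 0"

lemma s0_c: "s0 \<in> carrier C.G" using sg_c n0 by simp
lemma s0_sq: "s0 \<otimes>\<^bsub>C.G\<^esub> s0 = \<one>\<^bsub>C.G\<^esub>" using sg_sq n0 by simp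

lemma Q: "v < n \<Longrightarrow> sg v = rho v \<otimes>\<^bsub>C.G\<^esub> s0 \<otimes>\<^bsub>C.G\<^esub> inv\<^bsub>C.G\<^esub> rho v \<and> (\<exists>u\<in>carrier G. rho v = psi u)"
proof (rule tree_induct[of "\<lambda>v. sg v = rho v \<otimes>\<^bsub>C.G\<^esub> s0 \<otimes>\<^bsub>C.G\<^esub> inv\<^bsub>C.G\<^esub> rho v \<and> (\<exists>u\<in>carrier G. rho v = psi u)"])
  show "s0 = rho 0 \<otimes>\<^bsub>C.G\<^esub> s0 \<otimes>\<^bsub>C.G\<^esub> inv\<^bsub>C.G\<^esub> rho 0 \<and> (\<exists>u\<in>carrier G. rho 0 = psi u)"
    using s0_c by (simp add: rho_0) (use Gg.one_closed psi.hom_one in metis)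
next
  fix v assume v: "v < n" "v \<noteq> 0"
    and IH: "sg (par v) = rho (par v) \<otimes>\<^bsub>C.G\<^esub> s0 \<otimes>\<^bsub>C.G\<^esub> inv\<^bsub>C.G\<^esub> rho (par v) \<and> (\<exists>u\<in>carrier G. rho (par v) = psi u)"
  define p where "p = par v"
  define l where "l = pl v"
  have p: "p < n" and l: "l < L" and cl: "chi l = v" using par_ax[OF v] p_def l_def by auto
  have rp: "rho p \<in> carrier C.G" using rho_c[OF p] .
  have sp: "sg p = rho p \<otimes>\<^bsub>C.G\<^esub> s0 \<otimes>\<^bsub>C.G\<^esub> inv\<^bsub>C.G\<^esub> rho p" using IH p_def by simp
  obtain u where u: "u \<in> carrier G" "rho p = psi u" using IH p_def by auto
  define z where "z = zz l"
  have zdef: "z = inv\<^bsub>C.G\<^esub> rho p \<otimes>\<^bsub>C.G\<^esub> (rho p \<otimes>\<^bsub>C.G\<^esub> s0 \<otimes>\<^bsub>C.G\<^esub> inv\<^bsub>C.G\<^esub> rho p) \<otimes>\<^bsub>C.G\<^esub> sg v \<otimes>\<^bsub>C.G\<^esub> rho p"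
    unfolding z_def zz_def cl p_def[symmetric] sp ..
  have zc: "z \<in> carrier C.G" using zz_c[OF l] z_def by simp
  have cz: "s0 \<otimes>\<^bsub>C.G\<^esub> z \<otimes>\<^bsub>C.G\<^esub> s0 = inv\<^bsub>C.G\<^esub> z"
    unfolding zdef by (rule Cg.L1[OF rp s0_c sg_c[OF v(1)] s0_sq sg_sq[OF v(1)]])
  have zp: "z [^]\<^bsub>C.G\<^esub> Suc (2 * ee l) = \<one>\<^bsub>C.G\<^esub>" using zz_pow[OF l] ee[OF l] z_def by simp
  have L2': "z [^]\<^bsub>C.G\<^esub> ee l \<otimes>\<^bsub>C.G\<^esub> s0 \<otimes>\<^bsub>C.G\<^esub> inv\<^bsub>C.G\<^esub> (z [^]\<^bsub>C.G\<^esub> ee l) = inv\<^bsub>C.G\<^esub> z \<otimes>\<^bsub>C.G\<^esub> s0"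
    by (rule Cg.L2[OF zc s0_c s0_sq cz zp])
  have rv: "rho v = rho p \<otimes>\<^bsub>C.G\<^esub> z [^]\<^bsub>C.G\<^esub> ee l" using rho_step[OF v] p_def l_def z_def by simp
  have "rho v \<otimes>\<^bsub>C.G\<^esub> s0 \<otimes>\<^bsub>C.G\<^esub> inv\<^bsub>C.G\<^esub> rho v
      = rho p \<otimes>\<^bsub>C.G\<^esub> (z [^]\<^bsub>C.G\<^esub> ee l \<otimes>\<^bsub>C.G\<^esub> s0 \<otimes>\<^bsub>C.G\<^esub> inv\<^bsub>C.G\<^esub> (z [^]\<^bsub>C.G\<^esub> ee l)) \<otimes>\<^bsub>C.G\<^esub> inv\<^bsub>C.G\<^esub> rho p"
    unfolding rv using rp zc s0_c by (simp add: Cg.m_assoc Cg.inv_mult_group)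
  also have "\<dots> = rho p \<otimes>\<^bsub>C.G\<^esub> (inv\<^bsub>C.G\<^esub> z \<otimes>\<^bsub>C.G\<^esub> s0) \<otimes>\<^bsub>C.G\<^esub> inv\<^bsub>C.G\<^esub> rho p" unfolding L2' ..
  also have "\<dots> = sg v"
    unfolding zdef by (rule Cg.L3[OF rp s0_c sg_c[OF v(1)] s0_sq sg_sq[OF v(1)]])
  finally have 1: "sg v = rho v \<otimes>\<^bsub>C.G\<^esub> s0 \<otimes>\<^bsub>C.G\<^esub> inv\<^bsub>C.G\<^esub> rho v" by simp
  have "rho v = psi (u \<otimes>\<^bsub>G\<^esub> gen l [^]\<^bsub>G\<^esub> ee l)"
    using rv u gen_c[OF l] z_def psi(2)[OF l] by (simp add: psi.hom_nat_pow)
  moreover have "u \<otimes>\<^bsub>G\<^esub> gen l [^]\<^bsub>G\<^esub> ee l \<in> carrier G" using u gen_c[OF l] by simp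
  ultimately show "sg v = rho v \<otimes>\<^bsub>C.G\<^esub> s0 \<otimes>\<^bsub>C.G\<^esub> inv\<^bsub>C.G\<^esub> rho v \<and> (\<exists>u\<in>carrier G. rho v = psi u)"
    using 1 by blast
qed

lemma zz_conj: "l < L \<Longrightarrow> s0 \<otimes>\<^bsub>C.G\<^esub> zz l \<otimes>\<^bsub>C.G\<^esub> s0 = inv\<^bsub>C.G\<^esub> zz l"
proof -
  assume l: "l < L"
  define v where "v = chi l"
  have v: "v < n" "v \<noteq> 0" "par v < n" using chi_c[OF l] v_def by auto
  have rp: "rho (par v) \<in> carrier C.G" using rho_c[OF v(3)] .
  have sp: "sg (par v) = rho (par v) \<otimes>\<^bsub>C.G\<^esub> s0 \<otimes>\<^bsub>C.G\<^esub> inv\<^bsub>C.G\<^esub> rho (par v)" using Q[OF v(3)] by simp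
  have zdef: "zz l = inv\<^bsub>C.G\<^esub> rho (par v) \<otimes>\<^bsub>C.G\<^esub> (rho (par v) \<otimes>\<^bsub>C.G\<^esub> s0 \<otimes>\<^bsub>C.G\<^esub> inv\<^bsub>C.G\<^esub> rho (par v)) \<otimes>\<^bsub>C.G\<^esub> sg v \<otimes>\<^bsub>C.G\<^esub> rho (par v)"
    unfolding zz_def v_def[symmetric] sp ..
  show ?thesis unfolding zdef by (rule Cg.L1[OF rp s0_c sg_c[OF v(1)] s0_sq sg_sq[OF v(1)]])
qed

lemma psi_conj: "u \<in> carrier G \<Longrightarrow> s0 \<otimes>\<^bsub>C.G\<^esub> psi u \<otimes>\<^bsub>C.G\<^esub> s0 = psi (iota u)"
proof -
  assume u: "u \<in> carrier G"
  have h1: "(\<lambda>u. s0 \<otimes>\<^bsub>C.G\<^esub> psi u \<otimes>\<^bsub>C.G\<^esub> s0) \<in> hom G C.G"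
  proof (rule homI)
    fix x assume "x \<in> carrier G" then show "s0 \<otimes>\<^bsub>C.G\<^esub> psi x \<otimes>\<^bsub>C.G\<^esub> s0 \<in> carrier C.G" using s0_c by simp
  next
    fix x y assume xy: "x \<in> carrier G" "y \<in> carrier G"
    show "s0 \<otimes>\<^bsub>C.G\<^esub> psi (x \<otimes>\<^bsub>G\<^esub> y) \<otimes>\<^bsub>C.G\<^esub> s0 = (s0 \<otimes>\<^bsub>C.G\<^esub> psi x \<otimes>\<^bsub>C.G\<^esub> s0) \<otimes>\<^bsub>C.G\<^esub> (s0 \<otimes>\<^bsub>C.G\<^esub> psi y \<otimes>\<^bsub>C.G\<^esub> s0)"
      using xy s0_c Cg.invol_cancel[OF s0_c s0_sq] by (simp add: Cg.m_assoc)
  qed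
  have "(\<lambda>u. s0 \<otimes>\<^bsub>C.G\<^esub> psi u \<otimes>\<^bsub>C.G\<^esub> s0) u = (psi \<circ> iota) u"
  proof (rule hom_ext[OF C.group_G h1 hom_compose[OF iota(1) psi(1)] _ u])
    fix l assume "l \<in> {..<L}"
    then have l: "l < L" by simp
    show "s0 \<otimes>\<^bsub>C.G\<^esub> psi (gen l) \<otimes>\<^bsub>C.G\<^esub> s0 = (psi \<circ> iota) (gen l)"
      using zz_conj[OF l] gen_c[OF l] by (simp add: psi(2)[OF l] iota(2)[OF l] psi.hom_inv)
  qed
  then show ?thesis by simp
qed

lemma sg_psi: "i < n \<Longrightarrow> u \<in> carrier G \<Longrightarrow> \<exists>w\<in>carrier G. sg i \<otimes>\<^bsub>C.G\<^esub> psi u = psi w \<otimes>\<^bsub>C.G\<^esub> s0"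
proof -
  assume i: "i < n" and u: "u \<in> carrier G"
  obtain p where p: "p \<in> carrier G" "rho i = psi p" using Q[OF i] by blast
  have si: "sg i = psi p \<otimes>\<^bsub>C.G\<^esub> s0 \<otimes>\<^bsub>C.G\<^esub> psi (inv\<^bsub>G\<^esub> p)" using Q[OF i] p by (simp add: psi.hom_inv)
  have "sg i \<otimes>\<^bsub>C.G\<^esub> psi u = psi p \<otimes>\<^bsub>C.G\<^esub> (s0 \<otimes>\<^bsub>C.G\<^esub> psi (inv\<^bsub>G\<^esub> p \<otimes>\<^bsub>G\<^esub> u) \<otimes>\<^bsub>C.G\<^esub> s0) \<otimes>\<^bsub>C.G\<^esub> s0"
    unfolding si using p u s0_c s0_sq Cg.invol_cancel[OF s0_c s0_sq] by (simp add: Cg.m_assoc)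
  also have "\<dots> = psi p \<otimes>\<^bsub>C.G\<^esub> psi (iota (inv\<^bsub>G\<^esub> p \<otimes>\<^bsub>G\<^esub> u)) \<otimes>\<^bsub>C.G\<^esub> s0"
  proof -
    have "s0 \<otimes>\<^bsub>C.G\<^esub> psi (inv\<^bsub>G\<^esub> p \<otimes>\<^bsub>G\<^esub> u) \<otimes>\<^bsub>C.G\<^esub> s0 = psi (iota (inv\<^bsub>G\<^esub> p \<otimes>\<^bsub>G\<^esub> u))"
      by (rule psi_conj) (use p u in simp)
    then show ?thesis by (simp only:)
  qed
  also have "\<dots> = psi (p \<otimes>\<^bsub>G\<^esub> iota (inv\<^bsub>G\<^esub> p \<otimes>\<^bsub>G\<^esub> u)) \<otimes>\<^bsub>C.G\<^esub> s0"
    using p u by (simp add: iota_carrier)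
  finally have e: "sg i \<otimes>\<^bsub>C.G\<^esub> psi u = psi (p \<otimes>\<^bsub>G\<^esub> iota (inv\<^bsub>G\<^esub> p \<otimes>\<^bsub>G\<^esub> u)) \<otimes>\<^bsub>C.G\<^esub> s0" .
  have "p \<otimes>\<^bsub>G\<^esub> iota (inv\<^bsub>G\<^esub> p \<otimes>\<^bsub>G\<^esub> u) \<in> carrier G" using p u by (simp add: iota_carrier)
  then show ?thesis using e by blast
qed

lemma cover: assumes x: "x \<in> carrier C.G" shows "\<exists>u\<in>carrier G. x = psi u \<or> x = psi u \<otimes>\<^bsub>C.G\<^esub> s0"
proof -
  define P where "P x = (\<exists>u\<in>carrier G. x = psi u \<or> x = psi u \<otimes>\<^bsub>C.G\<^esub> s0)" for x
  have step: "P (sg i \<otimes>\<^bsub>C.G\<^esub> y)" if i: "i < n" and y: "y \<in> carrier C.G" and IH: "P y" for i y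
  proof -
    obtain u where u: "u \<in> carrier G" "y = psi u \<or> y = psi u \<otimes>\<^bsub>C.G\<^esub> s0" using IH unfolding P_def by blast
    obtain w where w: "w \<in> carrier G" "sg i \<otimes>\<^bsub>C.G\<^esub> psi u = psi w \<otimes>\<^bsub>C.G\<^esub> s0" using sg_psi[OF i u(1)] by blast
    show ?thesis
    proof (cases "y = psi u")
      case True then show ?thesis using w unfolding P_def by auto
    next
      case False
      then have "y = psi u \<otimes>\<^bsub>C.G\<^esub> s0" using u by simp
      then have "sg i \<otimes>\<^bsub>C.G\<^esub> y = psi w \<otimes>\<^bsub>C.G\<^esub> (s0 \<otimes>\<^bsub>C.G\<^esub> s0)"
        using w u s0_c sg_c[OF i] by (simp add: Cg.m_assoc[symmetric])
      then show ?thesis using w s0_sq unfolding P_def by auto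
    qed
  qed
  have "P x"
  proof (rule C.carrier_induct[OF x])
    show "P \<one>\<^bsub>C.G\<^esub>" unfolding P_def using Gg.one_closed psi.hom_one by metis
  next
    fix i y assume "i \<in> {..<n}" "y \<in> carrier C.G" "P y"
    then show "P (sg i \<otimes>\<^bsub>C.G\<^esub> y)" using step by simp
  next
    fix i y assume h: "i \<in> {..<n}" "y \<in> carrier C.G" "P y"
    have "inv\<^bsub>C.G\<^esub> sg i = sg i" using Cg.invol_inv[OF sg_c sg_sq] h(1) by simp
    then show "P (inv\<^bsub>C.G\<^esub> sg i \<otimes>\<^bsub>C.G\<^esub> y)" using step h by simp
  qed
  then show ?thesis unfolding P_def .
qed

lemma Av0: "Av 0 = T"
  unfolding Av_def by (simp add: aa_0 Cj_one T_c)

lemma Phi_kernel: "x \<in> carrier C.G \<Longrightarrow> Phi x = \<one>\<^bsub>Aut\<^esub> \<Longrightarrow> x = \<one>\<^bsub>C.G\<^esub>"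
proof -
  assume x: "x \<in> carrier C.G" and k: "Phi x = \<one>\<^bsub>Aut\<^esub>"
  obtain u where u: "u \<in> carrier G" "x = psi u \<or> x = psi u \<otimes>\<^bsub>C.G\<^esub> s0" using cover[OF x] by blast
  have m3: "\<And>l. l < L \<Longrightarrow> 3 \<le> ms ! l" using odd_ax by blast
  show ?thesis
  proof (cases "x = psi u")
    case True
    then have "Cj u = \<one>\<^bsub>Aut\<^esub>" using k Phi_psi[OF u(1)] by simp
    then have "u = \<one>\<^bsub>G\<^esub>" using Cj_trivial[OF u(1) L2] by simp
    then show ?thesis using True by simp
  next
    case False
    then have "x = psi u \<otimes>\<^bsub>C.G\<^esub> s0" using u by simp
    then have "Cj u \<otimes>\<^bsub>Aut\<^esub> T = \<one>\<^bsub>Aut\<^esub>"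
      using k Phi_psi[OF u(1)] s0_c u(1) Phi(2)[OF n0] Av0 by simp
    then show ?thesis using CjT_nontrivial[OF u(1) L2 m3] by blast
  qed
qed

lemma Phi_inj: "inj_on Phi (carrier C.G)"
proof (rule inj_onI)
  fix x y assume x: "x \<in> carrier C.G" and y: "y \<in> carrier C.G" and e: "Phi x = Phi y"
  have "Phi (x \<otimes>\<^bsub>C.G\<^esub> inv\<^bsub>C.G\<^esub> y) = \<one>\<^bsub>Aut\<^esub>" using x y e by (simp add: Phi.hom_inv)
  then have "x \<otimes>\<^bsub>C.G\<^esub> inv\<^bsub>C.G\<^esub> y = \<one>\<^bsub>C.G\<^esub>" using x y by (intro Phi_kernel) simp_all
  moreover have "x = x \<otimes>\<^bsub>C.G\<^esub> inv\<^bsub>C.G\<^esub> y \<otimes>\<^bsub>C.G\<^esub> y" using x y by (simp add: Cg.m_assoc)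
  ultimately show "x = y" using y by simp
qed

lemma main: "\<exists>\<phi>. \<phi> \<in> hom (coxeter_group n m) (AutoGroup (free_product_cyclic ms)) \<and> inj_on \<phi> (carrier (coxeter_group n m))"
  using Phi(1) Phi_inj unfolding F_eq coxeter_group_def by blast

end

theorem corollary2p10:
  fixes W :: "('g, 'b) monoid_scheme" and n :: nat and m :: "nat \<Rightarrow> nat \<Rightarrow> enat"
    and ms :: "nat list"
  assumes "group W"
    and "coxeter_matrix n m"
    and "W \<cong> coxeter_group n m"
    and "odd_coxeter n m"
    and "cox_connected n m"
    and "cox_tree n m"
    and "n \<ge> 3"
    and "mset ms = finite_exponents n m"
  shows "\<exists>\<phi>. \<phi> \<in> hom W (AutoGroup (free_product_cyclic ms)) \<and> inj_on \<phi> (carrier W)"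
proof -
  obtain par pl chi d where ct: "ctree ms n m par pl chi d"
    using ctree_exists[OF assms(2,4,6,7,8)] by blast
  obtain \<phi> where phi: "\<phi> \<in> hom (coxeter_group n m) (AutoGroup (free_product_cyclic ms))"
    "inj_on \<phi> (carrier (coxeter_group n m))"
    using ctree.main[OF ct] by blast
  obtain h where h: "h \<in> iso W (coxeter_group n m)" using assms(3) by (auto simp: is_iso_def)
  then have hh: "h \<in> hom W (coxeter_group n m)" "bij_betw h (carrier W) (carrier (coxeter_group n m))"
    by (auto simp: iso_def)
  have "\<phi> \<circ> h \<in> hom W (AutoGroup (free_product_cyclic ms))" by (rule hom_compose[OF hh(1) phi(1)])
  moreover have "inj_on (\<phi> \<circ> h) (carrier W)"
  proof (rule comp_inj_on)
    show "inj_on h (carrier W)" using hh(2) by (simp add: bij_betw_def)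
    show "inj_on \<phi> (h ` carrier W)" using hh(2) phi(2) by (simp add: bij_betw_def)
  qed
  ultimately show ?thesis by blast
qed

end
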